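(* Let $(\mathbb H,\|\cdot\|)$ be a separable real Hilbert space, $c>0$, $\mathcal X=\{x\in\mathbb H:\|x\|\le c\}$, and let $(X_i)_{i\ge1}$ be a centered $\mathcal X$-valued process with $\mathbb E\|X_i\|^2\le\sigma^2$ for all $i$ (some $\sigma>0$). Let $\tau(k)$ be its $\tau$-mixing coefficients and, for $n\ge1$, \[ \ell^\star:=\max\Big(\Big\{1\le\ell\le n:\ \tau\big(\lfloor n/\ell\rfloor\big)\le \frac{c}{\ell}\vee\frac{\sigma}{\sqrt\ell}\Big\}\cup\{1\}\Big). \] Then for every $\eta\in(0,\tfrac12]$, with probability at least $1-\eta$, \[ \Big\|\frac1n\sum_{i=1}^nX_i\Big\|\le\log\Big(\frac2\eta\Big)\Big(\frac{13\sigma}{\sqrt{\ell^\star}}+\frac{21c}{\ell^\star}\Big). \]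
   Context: $\tau$-mixing coefficients: let $\mathcal C$ be the space of bounded Lipschitz real functions on $\mathcal X$ and $C(f)=\sup\{|f(s)-f(t)|/\|s-t\|: s,t\in\mathcal X,s\ne t\}$ the Lipschitz seminorm, $\mathcal C_1=\{f\in\mathcal C:C(f)\le1\}$, $\mathcal M_i=\sigma(X_1,\dots,X_i)$. Then $\tau(k)=\sup\{\|\mathbb E[\varphi(X_{i+k})\mid\mathcal M_i]-\mathbb E[\varphi(X_{i+k})]\|_{L_\infty(\mathbb P)}:\varphi\in\mathcal C_1,i\ge1\}$ for $k\ge1$. "Centered" means $\mathbb E X_i=0$. $a\vee b=\max(a,b)$. *)

theory Defs
  imports "HOL-Probability.Probability"
begin

definition lipC1 :: "real \<Rightarrow> ('h::real_normed_vector \<Rightarrow> real) set" where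
  "lipC1 c = {\<phi>. bounded (\<phi> ` cball 0 c) \<and> 1-lipschitz_on (cball 0 c) \<phi>}"

definition hist :: "'a measure \<Rightarrow> (nat \<Rightarrow> 'a \<Rightarrow> 'h::topological_space) \<Rightarrow> nat \<Rightarrow> 'a measure" where
  "hist M X i = sigma (space M)
     {X j -` A \<inter> space M | j A. j \<in> {1..i} \<and> A \<in> sets borel}"

definition tau_mix :: "'a measure \<Rightarrow> (nat \<Rightarrow> 'a \<Rightarrow> 'h::real_normed_vector) \<Rightarrow> real \<Rightarrow> nat \<Rightarrow> ereal" where
  "tau_mix M X c k =
     (SUP p \<in> {(\<phi>, i). \<phi> \<in> lipC1 c \<and> i \<ge> (1::nat)}.
        esssup M (\<lambda>\<omega>. ereal \<bar>real_cond_exp M (hist M X (snd p)) (\<lambda>\<omega>. fst p (X (snd p + k) \<omega>)) \<omega>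
                         - (\<integral>\<omega>'. fst p (X (snd p + k) \<omega>') \<partial>M)\<bar>))"

definition lstar :: "'a measure \<Rightarrow> (nat \<Rightarrow> 'a \<Rightarrow> 'h::real_normed_vector) \<Rightarrow> real \<Rightarrow> real \<Rightarrow> nat \<Rightarrow> nat" where
  "lstar M X c \<sigma> n = Max ({l \<in> {1..n}. tau_mix M X c (n div l)
        \<le> ereal (max (c / real l) (\<sigma> / sqrt (real l)))} \<union> {1})"

end

theory Submission
  imports Defs
begin

lemma exp_quad: fixes w :: real assumes "\<bar>w\<bar> \<le> 1" shows "exp w \<le> 1 + w + 3/2 * w^2"
proof -
  obtain t where t: "\<bar>t\<bar> \<le> \<bar>w\<bar>" "exp w = (\<Sum>m<2. (w ^ m) / fact m) + (exp t / fact 2) * w ^ 2"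
    using Maclaurin_exp_le[of w 2] by blast
  have "exp t \<le> exp 1" using t(1) assms by simp
  also have "exp (1::real) \<le> 3" using exp_bound[of 1] by simp
  finally have "exp t / 2 * w^2 \<le> 3/2 * w^2" by (intro mult_right_mono) auto
  then show ?thesis using t(2) by (simp add: numeral_2_eq_2)
qed

definition hh :: "real \<Rightarrow> 'h::real_inner \<Rightarrow> real" where
  "hh \<mu> x = sqrt ((norm x)^2 + 1/\<mu>^2)"

definition Phi :: "real \<Rightarrow> 'h::real_inner \<Rightarrow> real" where
  "Phi \<mu> x = exp (\<mu> * hh \<mu> x)"

lemma hh_pos: "\<mu> > 0 \<Longrightarrow> hh \<mu> x \<ge> 1/\<mu>"
  unfolding hh_def by (rule real_le_rsqrt) (auto simp: power_divide)

lemma hh_ge_norm: "norm x \<le> hh \<mu> x"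
  unfolding hh_def by (rule real_le_rsqrt) auto

lemma hh_le: "\<mu> > 0 \<Longrightarrow> hh \<mu> x \<le> norm x + 1/\<mu>"
  unfolding hh_def by (rule real_sqrt_le_iff'[THEN iffD2]) (auto simp: power2_sum power_divide)

lemma Phi_0: "\<mu> > 0 \<Longrightarrow> Phi \<mu> (0::'h::real_inner) = exp 1"
  unfolding Phi_def hh_def by (simp add: real_sqrt_divide)

lemma pointwise:
  fixes x d :: "'h::real_inner"
  assumes mu: "\<mu> > 0" and b: "\<mu> * norm d \<le> 1/2"
  shows "Phi \<mu> (x + d) \<le> Phi \<mu> x * (1 + \<mu> * ((x /\<^sub>R hh \<mu> x) \<bullet> d) + 3 * \<mu>^2 * (norm d)^2)"
proof -
  define H where "H = hh \<mu> x"
  define bd where "bd = norm d"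
  define sd where "sd = x \<bullet> d"
  have H1: "H \<ge> 1/\<mu>" unfolding H_def by (rule hh_pos[OF mu])
  have Hpos: "H > 0" using H1 mu by (meson divide_pos_pos less_le_trans zero_less_one)
  have Hx: "norm x \<le> H" unfolding H_def by (rule hh_ge_norm)
  have HH: "H^2 = (norm x)^2 + 1/\<mu>^2" unfolding H_def hh_def by simp
  have nsq: "(norm (x + d))^2 = (norm x)^2 + 2 * sd + bd^2"
    unfolding sd_def bd_def power2_norm_eq_inner by (simp add: inner_add inner_commute)
  have hxd: "hh \<mu> (x + d) = sqrt (H^2 + 2 * sd + bd^2)"
    unfolding hh_def HH nsq by (simp add: algebra_simps)
  have Heq: "H^2 + 2 * sd + bd^2 = (norm (x + d))^2 + 1/\<mu>^2" using HH nsq by simp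
  have "H^2 + 2 * sd + bd^2 \<ge> 0" unfolding Heq by (intro add_nonneg_nonneg) auto
  have "2 * sd + bd^2 \<ge> -(H^2)" using \<open>H^2 + 2 * sd + bd^2 \<ge> 0\<close> by simp
  then have R0: "H + (2 * sd + bd^2)/(2*H) \<ge> 0"
  proof -
    have "(2 * sd + bd^2)/(2*H) \<ge> (-(H^2))/(2*H)" using Hpos \<open>2 * sd + bd^2 \<ge> -(H^2)\<close>
      by (intro divide_right_mono) auto
    also have "(-(H^2))/(2*H) = - H/2" using Hpos by (simp add: power2_eq_square)
    finally show ?thesis using Hpos by simp
  qed
  have "H^2 + 2 * sd + bd^2 \<le> (H + (2 * sd + bd^2)/(2*H))^2"
  proof -
    have "(H + (2 * sd + bd^2)/(2*H))^2 = H^2 + (2 * sd+bd^2) + ((2 * sd + bd^2)/(2*H))^2"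
      using Hpos by (simp add: power2_sum field_simps power2_eq_square)
    then show ?thesis by simp
  qed
  then have "hh \<mu> (x + d) \<le> H + (2 * sd + bd^2)/(2*H)"
    unfolding hxd using R0 \<open>H^2 + 2 * sd + bd^2 \<ge> 0\<close> by (intro real_le_lsqrt) auto
  also have "H + (2 * sd + bd^2)/(2*H) = H + sd/H + bd^2/(2*H)"
    using Hpos by (simp add: field_simps)
  finally have A: "hh \<mu> (x + d) \<le> H + sd/H + bd^2/(2*H)" .
  define v where "v = \<mu> * sd / H"
  have iH: "1/H \<le> \<mu>" using H1 mu Hpos by (simp add: field_simps)
  have "\<mu> * (bd^2/(2*H)) = (\<mu> * bd^2 / 2) * (1/H)" by simp
  also have "\<dots> \<le> (\<mu> * bd^2 / 2) * \<mu>" using iH mu by (intro mult_left_mono) auto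
  finally have B: "\<mu> * (bd^2/(2*H)) \<le> \<mu>^2 * bd^2 / 2" by (simp add: power2_eq_square mult_ac)
  have C: "\<mu> * hh \<mu> (x + d) \<le> \<mu> * H + (v + \<mu>^2 * bd^2 / 2)"
  proof -
    have "\<mu> * hh \<mu> (x + d) \<le> \<mu> * (H + sd/H + bd^2/(2*H))" using A mu by (intro mult_left_mono) auto
    also have "\<dots> = \<mu> * H + v + \<mu> * (bd^2/(2*H))" unfolding v_def by (simp add: algebra_simps)
    finally show ?thesis using B by simp
  qed
  have sdb: "\<bar>sd\<bar> \<le> H * bd"
  proof -
    have "\<bar>sd\<bar> \<le> norm x * bd" unfolding sd_def bd_def by (rule Cauchy_Schwarz_ineq2)
    also have "\<dots> \<le> H * bd" using Hx unfolding bd_def by (intro mult_right_mono) auto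
    finally show ?thesis .
  qed
  have vb: "\<bar>v\<bar> \<le> \<mu> * bd"
  proof -
    have "\<bar>v\<bar> = \<mu> * \<bar>sd\<bar> / H" unfolding v_def using mu Hpos by (simp add: abs_mult)
    also have "\<dots> \<le> \<mu> * (H * bd) / H" using sdb mu Hpos by (intro divide_right_mono mult_left_mono) auto
    finally show ?thesis using Hpos by simp
  qed
  have mb: "\<mu> * bd \<le> 1/2" "0 \<le> \<mu> * bd" using b mu unfolding bd_def by auto
  have zb: "\<mu>^2 * bd^2 / 2 \<le> (\<mu> * bd) / 4"
  proof -
    have "\<mu>^2 * bd^2 / 2 = (\<mu> * bd) * (\<mu> * bd) / 2" by (simp add: power2_eq_square)
    also have "\<dots> \<le> (\<mu> * bd) * (1/2) / 2" using mb by (intro divide_right_mono mult_left_mono) auto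
    finally show ?thesis by simp
  qed
  define w where "w = v + \<mu>^2 * bd^2 / 2"
  have z0: "0 \<le> \<mu>^2 * bd^2 / 2" by simp
  have wb: "\<bar>w\<bar> \<le> 5/4 * (\<mu> * bd)" unfolding w_def using vb zb z0
    by linarith
  have w1: "\<bar>w\<bar> \<le> 1" using wb mb by simp
  have w2: "w^2 \<le> 25/16 * (\<mu>^2 * bd^2)"
  proof -
    have "w^2 = \<bar>w\<bar>^2" by simp
    also have "\<dots> \<le> (5/4 * (\<mu> * bd))^2" using wb by (intro power_mono) auto
    also have "(5/4 * (\<mu> * bd))^2 = 25/16 * (\<mu>^2 * bd^2)" by (simp add: power_mult_distrib power2_eq_square)
    finally show ?thesis .
  qed
  have "Phi \<mu> (x + d) \<le> exp (\<mu> * H + w)" unfolding Phi_def w_def using C by simp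
  also have "\<dots> = Phi \<mu> x * exp w" unfolding Phi_def H_def by (simp add: exp_add)
  also have "\<dots> \<le> Phi \<mu> x * (1 + w + 3/2 * w^2)" unfolding Phi_def
    by (intro mult_left_mono exp_quad w1) auto
  also have "\<dots> \<le> Phi \<mu> x * (1 + v + 3 * \<mu>^2 * bd^2)" unfolding Phi_def
  proof (intro mult_left_mono)
    have e1: "3 * \<mu>^2 * bd^2 = 3 * (\<mu>^2 * bd^2)" "w = v + (\<mu>^2 * bd^2) / 2" unfolding w_def by simp_all
    have e2: "0 \<le> \<mu>^2 * bd^2" by simp
    show "1 + w + 3/2 * w^2 \<le> 1 + v + 3 * \<mu>^2 * bd^2" using w2 e1 e2
      by linarith
  qed auto
  also have "v = \<mu> * ((x /\<^sub>R hh \<mu> x) \<bullet> d)" unfolding v_def sd_def H_def by (simp add: divide_inverse mult_ac)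
  finally show ?thesis unfolding bd_def .
qed


locale tmix = prob_space M for M :: "'a measure" +
  fixes X :: "nat \<Rightarrow> 'a \<Rightarrow> 'h::{real_inner, complete_space, second_countable_topology}"
    and c \<sigma> \<tau>0 :: real and k :: nat
  assumes c_pos: "c > 0"
    and Xmeas: "\<And>i. i \<ge> 1 \<Longrightarrow> X i \<in> borel_measurable M"
    and Xbnd: "\<And>i \<omega>. i \<ge> 1 \<Longrightarrow> \<omega> \<in> space M \<Longrightarrow> norm (X i \<omega>) \<le> c"
    and Xint: "\<And>i. i \<ge> 1 \<Longrightarrow> integrable M (X i)"
    and Xmean: "\<And>i. i \<ge> 1 \<Longrightarrow> (\<integral>\<omega>. X i \<omega> \<partial>M) = 0"
    and Xvar: "\<And>i. i \<ge> 1 \<Longrightarrow> (\<integral>\<omega>. (norm (X i \<omega>))^2 \<partial>M) \<le> \<sigma>^2"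
    and tau: "tau_mix M X c k \<le> ereal \<tau>0"
    and tau0_nn: "\<tau>0 \<ge> 0"
begin

lemma hist_space: "space (hist M X i) = space M"
  unfolding hist_def by (rule space_measure_of) auto

lemma hist_sets: "sets (hist M X i) = sigma_sets (space M) {X j -` A \<inter> space M | j A. j \<in> {1..i} \<and> A \<in> sets borel}"
  unfolding hist_def by (rule sets_measure_of) auto

lemma hist_sub: "subalgebra M (hist M X i)"
proof -
  have "sigma_sets (space M) {X j -` A \<inter> space M | j A. j \<in> {1..i} \<and> A \<in> sets borel} \<subseteq> sets M"
    by (rule sets.sigma_sets_subset) (auto intro: measurable_sets[OF Xmeas])
  then show ?thesis unfolding subalgebra_def hist_space hist_sets by simp
qed

lemma hist_fms: "finite_measure_subalgebra M (hist M X i)"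
  unfolding finite_measure_subalgebra_def finite_measure_subalgebra_axioms_def
  using hist_sub finite_measure_axioms by simp

lemma X_hist: assumes "1 \<le> j" "j \<le> i" shows "X j \<in> borel_measurable (hist M X i)"
proof (rule measurableI)
  fix x assume "x \<in> space (hist M X i)" then show "X j x \<in> space borel" by simp
next
  fix A :: "'h set" assume "A \<in> sets borel"
  then have "X j -` A \<inter> space M \<in> {X j -` A \<inter> space M | j A. j \<in> {1..i} \<and> A \<in> sets borel}"
    using assms by auto
  then show "X j -` A \<inter> space (hist M X i) \<in> sets (hist M X i)"
    unfolding hist_sets hist_space by auto
qed

lemma meas_from_hist: "f \<in> borel_measurable (hist M X i) \<Longrightarrow> f \<in> borel_measurable M"
  by (rule measurable_from_subalg[OF hist_sub])

lemma lip_comp_meas: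
  assumes "\<phi> \<in> lipC1 c" "j \<ge> 1"
  shows "(\<lambda>\<omega>. \<phi> (X j \<omega>)) \<in> borel_measurable M"
proof -
  have "continuous_on (cball 0 c) \<phi>" using assms(1) unfolding lipC1_def
    using lipschitz_on_continuous_on by blast
  then have "(\<lambda>x. indicator (cball 0 c) x *\<^sub>R \<phi> x) \<in> borel_measurable borel"
    by (intro borel_measurable_continuous_on_indicator) auto
  then have "(\<lambda>\<omega>. indicator (cball 0 c) (X j \<omega>) *\<^sub>R \<phi> (X j \<omega>)) \<in> borel_measurable M"
    using Xmeas[OF assms(2)] by (rule measurable_compose[rotated])
  moreover have "\<And>\<omega>. \<omega> \<in> space M \<Longrightarrow> indicator (cball 0 c) (X j \<omega>) *\<^sub>R \<phi> (X j \<omega>) = \<phi> (X j \<omega>)"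
    using Xbnd[OF assms(2)] by (simp add: indicator_def)
  ultimately show ?thesis using measurable_cong[of M "\<lambda>\<omega>. indicator (cball 0 c) (X j \<omega>) *\<^sub>R \<phi> (X j \<omega>)" "\<lambda>\<omega>. \<phi> (X j \<omega>)"] by simp
qed


lemma bdd_int:
  fixes f :: "'a \<Rightarrow> real"
  assumes "f \<in> borel_measurable M" "\<And>x. x \<in> space M \<Longrightarrow> \<bar>f x\<bar> \<le> B"
  shows "integrable M f"
proof (rule integrable_const_bound[where B=B])
  show "AE x in M. norm (f x) \<le> B" using assms(2) by (intro AE_I2) simp
qed (rule assms(1))

lemma tau_AE:
  assumes "\<phi> \<in> lipC1 c" "i \<ge> 1"
  shows "AE \<omega> in M. \<bar>real_cond_exp M (hist M X i) (\<lambda>\<omega>. \<phi> (X (i+k) \<omega>)) \<omega>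
                        - (\<integral>\<omega>'. \<phi> (X (i+k) \<omega>') \<partial>M)\<bar> \<le> \<tau>0"
proof -
  let ?g = "\<lambda>\<omega>. ereal \<bar>real_cond_exp M (hist M X i) (\<lambda>\<omega>. \<phi> (X (i+k) \<omega>)) \<omega>
                        - (\<integral>\<omega>'. \<phi> (X (i+k) \<omega>') \<partial>M)\<bar>"
  have "esssup M ?g \<le> tau_mix M X c k"
    unfolding tau_mix_def
    by (rule SUP_upper2[of "(\<phi>, i)"]) (use assms in auto)
  then have E: "esssup M ?g \<le> ereal \<tau>0" using tau by (rule order_trans)
  have "AE \<omega> in M. ?g \<omega> \<le> esssup M ?g" by (rule esssup_AE)
  then have "AE \<omega> in M. ?g \<omega> \<le> ereal \<tau>0"
  proof (rule eventually_mono)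
    fix x assume "?g x \<le> esssup M ?g" then show "?g x \<le> ereal \<tau>0" using E by (rule order_trans)
  qed
  then show ?thesis by (rule eventually_mono) simp
qed

lemma lip_bounded:
  assumes "\<phi> \<in> lipC1 c"
  obtains K where "K \<ge> 0" "\<And>y. norm y \<le> c \<Longrightarrow> \<bar>\<phi> y\<bar> \<le> K"
proof -
  have "bounded (\<phi> ` cball 0 c)" using assms unfolding lipC1_def by auto
  then obtain K where "\<forall>z\<in>\<phi> ` cball 0 c. norm z \<le> K" unfolding bounded_iff by auto
  then have "\<And>y. norm y \<le> c \<Longrightarrow> \<bar>\<phi> y\<bar> \<le> K" by auto
  moreover have "K \<ge> 0"
  proof -
    have "(0::'h) \<in> cball 0 c" using c_pos by simp
    then have "norm (\<phi> 0) \<le> K" using \<open>\<forall>z\<in>\<phi> ` cball 0 c. norm z \<le> K\<close> by auto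
    then show ?thesis using norm_ge_zero order_trans by blast
  qed
  ultimately show ?thesis using that by blast
qed

lemma wbound:
  assumes phi: "\<phi> \<in> lipC1 c" and i: "i \<ge> 1"
    and wm: "w \<in> borel_measurable (hist M X i)"
    and w0: "\<And>\<omega>. \<omega> \<in> space M \<Longrightarrow> 0 \<le> w \<omega>"
    and wB: "\<And>\<omega>. \<omega> \<in> space M \<Longrightarrow> w \<omega> \<le> B"
  shows "(\<integral>\<omega>. w \<omega> * \<phi> (X (i+k) \<omega>) \<partial>M) \<le> (\<integral>\<omega>. w \<omega> \<partial>M) * ((\<integral>\<omega>. \<phi> (X (i+k) \<omega>) \<partial>M) + \<tau>0)"
proof -
  interpret S: sigma_finite_subalgebra M "hist M X i"
    using finite_measure_subalgebra_is_sigma_finite[OF hist_fms] .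
  let ?Y = "\<lambda>\<omega>. \<phi> (X (i+k) \<omega>)"
  let ?E = "\<integral>\<omega>. \<phi> (X (i+k) \<omega>) \<partial>M"
  obtain K where K: "K \<ge> 0" "\<And>y. norm y \<le> c \<Longrightarrow> \<bar>\<phi> y\<bar> \<le> K" using lip_bounded[OF phi] by blast
  have i1: "i + k \<ge> 1" using i by simp
  have Ym: "?Y \<in> borel_measurable M" by (rule lip_comp_meas[OF phi i1])
  have wM: "w \<in> borel_measurable M" by (rule meas_from_hist[OF wm])
  have Yb: "\<And>\<omega>. \<omega> \<in> space M \<Longrightarrow> \<bar>?Y \<omega>\<bar> \<le> K" using K(2) Xbnd[OF i1] by blast
  have intw: "integrable M w"
    by (rule bdd_int[OF wM, where B=B]) (metis w0 wB abs_of_nonneg)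
  have intwY: "integrable M (\<lambda>\<omega>. w \<omega> * ?Y \<omega>)"
  proof (rule bdd_int[where B="B*K"])
      fix x assume x: "x \<in> space M"
      have "\<bar>w x * ?Y x\<bar> = w x * \<bar>?Y x\<bar>" using w0[OF x] by (simp add: abs_mult)
      also have "\<dots> \<le> B * K" using w0[OF x] wB[OF x] Yb[OF x] K(1) by (intro mult_mono) auto
      finally show "\<bar>w x * ?Y x\<bar> \<le> B * K" .
  qed (rule borel_measurable_times[OF wM Ym])
  have eq: "(\<integral>\<omega>. w \<omega> * real_cond_exp M (hist M X i) ?Y \<omega> \<partial>M) = (\<integral>\<omega>. w \<omega> * ?Y \<omega> \<partial>M)"
    by (rule S.real_cond_exp_intg(2)[OF intwY wm Ym])
  have int2: "integrable M (\<lambda>\<omega>. w \<omega> * real_cond_exp M (hist M X i) ?Y \<omega>)"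
    by (rule S.real_cond_exp_intg(1)[OF intwY wm Ym])
  have "(\<integral>\<omega>. w \<omega> * real_cond_exp M (hist M X i) ?Y \<omega> \<partial>M) \<le> (\<integral>\<omega>. w \<omega> * (?E + \<tau>0) \<partial>M)"
  proof (rule integral_mono_AE[OF int2])
    show "integrable M (\<lambda>\<omega>. w \<omega> * (?E + \<tau>0))" using intw by simp
    show "AE \<omega> in M. w \<omega> * real_cond_exp M (hist M X i) ?Y \<omega> \<le> w \<omega> * (?E + \<tau>0)"
      using tau_AE[OF phi i] AE_space
    proof (eventually_elim)
      case (elim \<omega>)
      then have "real_cond_exp M (hist M X i) ?Y \<omega> \<le> ?E + \<tau>0" by linarith
      then show ?case using w0[OF elim(2)] by (rule mult_left_mono)
    qed
  qed
  moreover have "(\<integral>\<omega>. w \<omega> * (?E + \<tau>0) \<partial>M) = (\<integral>\<omega>. w \<omega> \<partial>M) * (?E + \<tau>0)"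
    by (rule integral_mult_left_zero)
  ultimately show ?thesis using eq by linarith
qed

end


lemma lip_inner:
  fixes v :: "'h::real_inner"
  assumes "v \<noteq> 0" "c \<ge> 0"
  shows "(\<lambda>y. (v \<bullet> y) / norm v) \<in> lipC1 c"
  unfolding lipC1_def
proof (safe)
  have "\<forall>y\<in>cball 0 c. norm ((v \<bullet> y) / norm v) \<le> c"
  proof
    fix y :: 'h assume y: "y \<in> cball 0 c"
    have "norm ((v \<bullet> y) / norm v) = \<bar>v \<bullet> y\<bar> / norm v" by (simp add: abs_div_pos)
    also have "\<dots> \<le> norm v * norm y / norm v" using assms(1)
      by (intro divide_right_mono Cauchy_Schwarz_ineq2) auto
    also have "\<dots> \<le> c" using assms(1) y by simp
    finally show "norm ((v \<bullet> y) / norm v) \<le> c" .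
  qed
  then show "bounded ((\<lambda>y. (v \<bullet> y) / norm v) ` cball 0 c)" unfolding bounded_iff by blast
  show "1-lipschitz_on (cball 0 c) (\<lambda>y. (v \<bullet> y) / norm v)"
  proof (rule lipschitz_onI)
    fix x y :: 'h
    have "dist ((v \<bullet> x) / norm v) ((v \<bullet> y) / norm v) = \<bar>v \<bullet> (x - y)\<bar> / norm v"
      by (simp add: dist_real_def inner_diff_right diff_divide_distrib[symmetric] abs_div_pos)
    also have "\<dots> \<le> norm v * norm (x - y) / norm v" using assms(1)
      by (intro divide_right_mono Cauchy_Schwarz_ineq2) auto
    also have "\<dots> = 1 * dist x y" using assms(1) by (simp add: dist_norm)
    finally show "dist ((v \<bullet> x) / norm v) ((v \<bullet> y) / norm v) \<le> 1 * dist x y" .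
  qed simp
qed

lemma lip_sq:
  assumes "c > 0"
  shows "(\<lambda>y::'h::real_normed_vector. (norm y)^2 / (2*c)) \<in> lipC1 c"
  unfolding lipC1_def
proof (safe)
  have "\<forall>y\<in>cball (0::'h) c. norm ((norm y)^2 / (2*c)) \<le> c^2/(2*c)"
  proof
    fix y :: 'h assume y: "y \<in> cball 0 c"
    have "norm ((norm y)^2 / (2*c)) = (norm y)^2 / (2*c)" using assms by simp
    also have "\<dots> \<le> c^2/(2*c)" using y assms by (intro divide_right_mono power_mono) auto
    finally show "norm ((norm y)^2 / (2*c)) \<le> c^2/(2*c)" .
  qed
  then show "bounded ((\<lambda>y. (norm y)^2 / (2*c)) ` cball (0::'h) c)" unfolding bounded_iff by blast
  show "1-lipschitz_on (cball 0 c) (\<lambda>y::'h. (norm y)^2 / (2*c))"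
  proof (rule lipschitz_onI)
    fix x y :: 'h assume x: "x \<in> cball 0 c" and y: "y \<in> cball 0 c"
    have "(norm x)^2 - (norm y)^2 = (norm x - norm y) * (norm x + norm y)"
      by (simp add: power2_eq_square algebra_simps)
    then have "\<bar>(norm x)^2 - (norm y)^2\<bar> = \<bar>norm x - norm y\<bar> * (norm x + norm y)"
      by (simp add: abs_mult)
    also have "\<dots> \<le> norm (x - y) * (2*c)"
      using x y by (intro mult_mono norm_triangle_ineq3) auto
    finally have A: "\<bar>(norm x)^2 - (norm y)^2\<bar> \<le> norm (x - y) * (2*c)" .
    have "dist ((norm x)^2 / (2*c)) ((norm y)^2 / (2*c)) = \<bar>(norm x)^2 - (norm y)^2\<bar> / (2*c)"
      using assms by (simp add: dist_real_def diff_divide_distrib[symmetric])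
    also have "\<dots> \<le> norm (x - y) * (2*c) / (2*c)" using A assms by (intro divide_right_mono) auto
    also have "\<dots> = 1 * dist x y" using assms by (simp add: dist_norm)
    finally show "dist ((norm x)^2 / (2*c)) ((norm y)^2 / (2*c)) \<le> 1 * dist x y" .
  qed simp
qed

context tmix
begin

lemma X_int: "j \<ge> 1 \<Longrightarrow> integrable M (X j)" by (rule Xint)

lemma cor_inner:
  assumes i: "i \<ge> 1"
    and wm: "w \<in> borel_measurable (hist M X i)"
    and w0: "\<And>\<omega>. \<omega> \<in> space M \<Longrightarrow> 0 \<le> w \<omega>"
    and wB: "\<And>\<omega>. \<omega> \<in> space M \<Longrightarrow> w \<omega> \<le> B"
  shows "(\<integral>\<omega>. w \<omega> * (v \<bullet> X (i+k) \<omega>) \<partial>M) \<le> \<tau>0 * norm v * (\<integral>\<omega>. w \<omega> \<partial>M)"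
proof (cases "v = 0")
  case True then show ?thesis by simp
next
  case False
  have i1: "i + k \<ge> 1" using i by simp
  have E1: "(\<integral>\<omega>. (v \<bullet> X (i+k) \<omega>) \<partial>M) = 0"
    using Xmean[OF i1] X_int[OF i1] by simp
  have E0: "(\<integral>\<omega>. (v \<bullet> X (i+k) \<omega>) / norm v \<partial>M) = 0"
    using E1 by simp
  have "(\<integral>\<omega>. w \<omega> * ((v \<bullet> X (i+k) \<omega>) / norm v) \<partial>M) \<le> (\<integral>\<omega>. w \<omega> \<partial>M) * ((\<integral>\<omega>. (v \<bullet> X (i+k) \<omega>) / norm v \<partial>M) + \<tau>0)"
    using c_pos by (intro wbound[OF lip_inner[OF False] i wm w0 wB]) simp
  then have "(\<integral>\<omega>. w \<omega> * ((v \<bullet> X (i+k) \<omega>) / norm v) \<partial>M) \<le> (\<integral>\<omega>. w \<omega> \<partial>M) * (0 + \<tau>0)"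
    unfolding E0 .
  then have H1: "norm v * (\<integral>\<omega>. w \<omega> * ((v \<bullet> X (i+k) \<omega>) / norm v) \<partial>M) \<le> norm v * ((\<integral>\<omega>. w \<omega> \<partial>M) * (0 + \<tau>0))"
    by (rule mult_left_mono) simp
  have H2: "(\<integral>\<omega>. w \<omega> * (v \<bullet> X (i+k) \<omega>) \<partial>M) = norm v * (\<integral>\<omega>. w \<omega> * ((v \<bullet> X (i+k) \<omega>) / norm v) \<partial>M)"
  proof -
    have "(\<integral>\<omega>. w \<omega> * (v \<bullet> X (i+k) \<omega>) \<partial>M) = (\<integral>\<omega>. norm v * (w \<omega> * ((v \<bullet> X (i+k) \<omega>) / norm v)) \<partial>M)"
      using False by (intro Bochner_Integration.integral_cong) auto
    also have "\<dots> = norm v * (\<integral>\<omega>. w \<omega> * ((v \<bullet> X (i+k) \<omega>) / norm v) \<partial>M)"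
      by (rule integral_mult_right_zero)
    finally show ?thesis .
  qed
  show ?thesis unfolding H2 using H1 by (simp add: mult_ac)
qed

lemma cor_sq:
  assumes i: "i \<ge> 1"
    and wm: "w \<in> borel_measurable (hist M X i)"
    and w0: "\<And>\<omega>. \<omega> \<in> space M \<Longrightarrow> 0 \<le> w \<omega>"
    and wB: "\<And>\<omega>. \<omega> \<in> space M \<Longrightarrow> w \<omega> \<le> B"
  shows "(\<integral>\<omega>. w \<omega> * (norm (X (i+k) \<omega>))^2 \<partial>M) \<le> (\<integral>\<omega>. w \<omega> \<partial>M) * (\<sigma>^2 + 2*c*\<tau>0)"
proof -
  have i1: "i + k \<ge> 1" using i by simp
  have W: "(\<integral>\<omega>. w \<omega> \<partial>M) \<ge> 0" using w0 by (intro integral_nonneg_AE AE_I2) auto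
  have "(\<integral>\<omega>. w \<omega> * ((norm (X (i+k) \<omega>))^2 / (2*c)) \<partial>M)
      \<le> (\<integral>\<omega>. w \<omega> \<partial>M) * ((\<integral>\<omega>. (norm (X (i+k) \<omega>))^2 / (2*c) \<partial>M) + \<tau>0)"
    by (rule wbound[OF lip_sq[OF c_pos] i wm w0 wB])
  also have "(\<integral>\<omega>. (norm (X (i+k) \<omega>))^2 / (2*c) \<partial>M) = (\<integral>\<omega>. (norm (X (i+k) \<omega>))^2 \<partial>M) / (2*c)"
    by simp
  also have "(\<integral>\<omega>. w \<omega> \<partial>M) * ((\<integral>\<omega>. (norm (X (i+k) \<omega>))^2 \<partial>M) / (2*c) + \<tau>0) \<le> (\<integral>\<omega>. w \<omega> \<partial>M) * (\<sigma>^2 / (2*c) + \<tau>0)"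
    using Xvar[OF i1] c_pos W by (intro mult_left_mono add_right_mono divide_right_mono) auto
  finally have A: "(\<integral>\<omega>. w \<omega> * ((norm (X (i+k) \<omega>))^2 / (2*c)) \<partial>M) \<le> (\<integral>\<omega>. w \<omega> \<partial>M) * (\<sigma>^2 / (2*c) + \<tau>0)" .
  have "(\<integral>\<omega>. w \<omega> * (norm (X (i+k) \<omega>))^2 \<partial>M) = (2*c) * (\<integral>\<omega>. w \<omega> * ((norm (X (i+k) \<omega>))^2 / (2*c)) \<partial>M)"
  proof -
    have "(\<integral>\<omega>. w \<omega> * (norm (X (i+k) \<omega>))^2 \<partial>M) = (\<integral>\<omega>. (2*c) * (w \<omega> * ((norm (X (i+k) \<omega>))^2 / (2*c))) \<partial>M)"
      using c_pos by (intro Bochner_Integration.integral_cong) auto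
    also have "\<dots> = (2*c) * (\<integral>\<omega>. w \<omega> * ((norm (X (i+k) \<omega>))^2 / (2*c)) \<partial>M)"
      by (rule integral_mult_right_zero)
    finally show ?thesis .
  qed
  also have "\<dots> \<le> (2*c) * ((\<integral>\<omega>. w \<omega> \<partial>M) * (\<sigma>^2 / (2*c) + \<tau>0))"
    using A c_pos by (intro mult_left_mono) auto
  also have "\<dots> = (\<integral>\<omega>. w \<omega> \<partial>M) * (\<sigma>^2 + 2*c*\<tau>0)" using c_pos by (simp add: field_simps)
  finally show ?thesis .
qed

end


context tmix begin

lemma rand_dir:
  assumes i: "i \<ge> 1"
    and wm: "w \<in> borel_measurable (hist M X i)"
    and w0: "\<And>\<omega>. \<omega> \<in> space M \<Longrightarrow> 0 \<le> w \<omega>"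
    and wB: "\<And>\<omega>. \<omega> \<in> space M \<Longrightarrow> w \<omega> \<le> B"
    and um: "u \<in> borel_measurable (hist M X i)"
    and u1: "\<And>\<omega>. \<omega> \<in> space M \<Longrightarrow> norm (u \<omega>) \<le> 1"
  shows "(\<integral>\<omega>. w \<omega> * (u \<omega> \<bullet> X (i+k) \<omega>) \<partial>M) \<le> \<tau>0 * (\<integral>\<omega>. w \<omega> \<partial>M)"
proof -
  let ?F = "hist M X i"
  let ?Y = "X (i+k)"
  have i1: "i + k \<ge> 1" using i by simp
  have Ym: "?Y \<in> borel_measurable M" by (rule Xmeas[OF i1])
  have Yb: "\<And>\<omega>. \<omega> \<in> space M \<Longrightarrow> norm (?Y \<omega>) \<le> c" by (rule Xbnd[OF i1])
  have wM: "w \<in> borel_measurable M" by (rule meas_from_hist[OF wm])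
  have uM: "u \<in> borel_measurable M" by (rule meas_from_hist[OF um])
  have B0: "B \<ge> 0"
  proof -
    obtain x where "x \<in> space M" using not_empty by blast
    then show ?thesis using w0 wB by (meson order_trans)
  qed
  obtain s where s_simple: "\<And>j. simple_function ?F (s j)"
    and s_lim: "\<And>x. x \<in> space ?F \<Longrightarrow> (\<lambda>j. s j x) \<longlonglongrightarrow> u x"
    and s_bnd: "\<And>j x. x \<in> space ?F \<Longrightarrow> dist (s j x) 0 \<le> 2 * dist (u x) 0"
    using borel_measurable_implies_sequence_metric[OF um, of 0] by blast
  have s2: "\<And>j x. x \<in> space M \<Longrightarrow> norm (s j x) \<le> 2"
  proof -
    fix j x assume x: "x \<in> space M"
    have "norm (s j x) \<le> 2 * norm (u x)" using s_bnd[of x j] x hist_space by simp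
    also have "\<dots> \<le> 2" using u1[OF x] by simp
    finally show "norm (s j x) \<le> 2" .
  qed
  have sF: "\<And>j. s j \<in> borel_measurable ?F" by (rule borel_measurable_simple_function[OF s_simple])
  have sM: "\<And>j. s j \<in> borel_measurable M" by (rule meas_from_hist[OF sF])
  have key: "(\<integral>\<omega>. w \<omega> * (s j \<omega> \<bullet> ?Y \<omega>) \<partial>M) \<le> \<tau>0 * (\<integral>\<omega>. w \<omega> * norm (s j \<omega>) \<partial>M)" for j
  proof -
    define V where "V = s j ` space M"
    have finV: "finite V" unfolding V_def using simple_functionD(1)[OF s_simple[of j]] hist_space by simp
    define A where "A v = s j -` {v} \<inter> space M" for v
    have AF: "A v \<in> sets ?F" for v
      unfolding A_def using simple_functionD(2)[OF s_simple[of j], of "{v}"] hist_space by simp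
    have indF: "(\<lambda>\<omega>. w \<omega> * indicator (A v) \<omega>) \<in> borel_measurable ?F" for v
      using wm AF by (intro borel_measurable_times borel_measurable_indicator)
    have rep: "(\<Sum>v\<in>V. indicator (A v) \<omega> * g v) = g (s j \<omega>)" if om: "\<omega> \<in> space M" for \<omega> and g :: "'h \<Rightarrow> real"
    proof -
      have "(\<Sum>v\<in>V. indicator (A v) \<omega> * g v) = (\<Sum>v\<in>V. if s j \<omega> = v then g v else 0)"
        using om unfolding A_def by (intro sum.cong) (auto simp: indicator_def)
      also have "\<dots> = g (s j \<omega>)" using finV om unfolding V_def by simp
      finally show ?thesis .
    qed
    have intv: "integrable M (\<lambda>\<omega>. indicator (A v) \<omega> * (w \<omega> * (v \<bullet> ?Y \<omega>)))" for v
    proof (rule bdd_int[where B="B * (norm v * c)"])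
      show "(\<lambda>\<omega>. indicator (A v) \<omega> * (w \<omega> * (v \<bullet> ?Y \<omega>))) \<in> borel_measurable M"
        using meas_from_hist[OF AF[THEN borel_measurable_indicator]] wM Ym
        by (intro borel_measurable_times borel_measurable_inner) auto
      fix x assume x: "x \<in> space M"
      have "\<bar>indicator (A v) x * (w x * (v \<bullet> ?Y x))\<bar> \<le> 1 * (B * (norm v * c))"
        unfolding abs_mult
      proof (rule mult_mono)
        show "\<bar>w x\<bar> * \<bar>v \<bullet> ?Y x\<bar> \<le> B * (norm v * c)"
        proof (rule mult_mono)
          show "\<bar>v \<bullet> ?Y x\<bar> \<le> norm v * c"
            using Cauchy_Schwarz_ineq2[of v "?Y x"] Yb[OF x] by (meson mult_left_mono norm_ge_zero order_trans)
        qed (use w0[OF x] wB[OF x] in auto)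
      qed (auto simp: indicator_def)
      then show "\<bar>indicator (A v) x * (w x * (v \<bullet> ?Y x))\<bar> \<le> B * (norm v * c)" by simp
    qed
    have intn: "integrable M (\<lambda>\<omega>. indicator (A v) \<omega> * (w \<omega> * norm v))" for v
    proof (rule bdd_int[where B="B * norm v"])
      show "(\<lambda>\<omega>. indicator (A v) \<omega> * (w \<omega> * norm v)) \<in> borel_measurable M"
        using meas_from_hist[OF AF[THEN borel_measurable_indicator]] wM
        by (intro borel_measurable_times) auto
      fix x assume x: "x \<in> space M"
      show "\<bar>indicator (A v) x * (w x * norm v)\<bar> \<le> B * norm v"
        using w0[OF x] wB[OF x] by (auto simp: indicator_def abs_mult intro: mult_right_mono)
    qed
    have "(\<integral>\<omega>. w \<omega> * (s j \<omega> \<bullet> ?Y \<omega>) \<partial>M) = (\<integral>\<omega>. (\<Sum>v\<in>V. indicator (A v) \<omega> * (w \<omega> * (v \<bullet> ?Y \<omega>))) \<partial>M)"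
      by (intro Bochner_Integration.integral_cong refl) (simp add: rep)
    also have "\<dots> = (\<Sum>v\<in>V. (\<integral>\<omega>. indicator (A v) \<omega> * (w \<omega> * (v \<bullet> ?Y \<omega>)) \<partial>M))"
      by (rule Bochner_Integration.integral_sum[OF intv])
    also have "\<dots> \<le> (\<Sum>v\<in>V. \<tau>0 * (\<integral>\<omega>. indicator (A v) \<omega> * (w \<omega> * norm v) \<partial>M))"
    proof (rule sum_mono)
      fix v assume "v \<in> V"
      have "(\<integral>\<omega>. indicator (A v) \<omega> * (w \<omega> * (v \<bullet> ?Y \<omega>)) \<partial>M) = (\<integral>\<omega>. (w \<omega> * indicator (A v) \<omega>) * (v \<bullet> ?Y \<omega>) \<partial>M)"
        by (simp add: mult_ac)
      also have "\<dots> \<le> \<tau>0 * norm v * (\<integral>\<omega>. w \<omega> * indicator (A v) \<omega> \<partial>M)"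
      proof (rule cor_inner[OF i indF])
        fix \<omega> assume "\<omega> \<in> space M"
        then show "0 \<le> w \<omega> * indicator (A v) \<omega>" "w \<omega> * indicator (A v) \<omega> \<le> B"
          using w0 wB B0 by (auto simp: indicator_def)
      qed
      also have "\<dots> = \<tau>0 * (\<integral>\<omega>. indicator (A v) \<omega> * (w \<omega> * norm v) \<partial>M)"
        by (simp add: mult_ac)
      finally show "(\<integral>\<omega>. indicator (A v) \<omega> * (w \<omega> * (v \<bullet> ?Y \<omega>)) \<partial>M) \<le> \<tau>0 * (\<integral>\<omega>. indicator (A v) \<omega> * (w \<omega> * norm v) \<partial>M)" .
    qed
    also have "\<dots> = \<tau>0 * (\<Sum>v\<in>V. (\<integral>\<omega>. indicator (A v) \<omega> * (w \<omega> * norm v) \<partial>M))"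
      by (simp add: sum_distrib_left)
    also have "(\<Sum>v\<in>V. (\<integral>\<omega>. indicator (A v) \<omega> * (w \<omega> * norm v) \<partial>M)) = (\<integral>\<omega>. (\<Sum>v\<in>V. indicator (A v) \<omega> * (w \<omega> * norm v)) \<partial>M)"
      by (rule Bochner_Integration.integral_sum[OF intn, symmetric])
    also have "\<dots> = (\<integral>\<omega>. w \<omega> * norm (s j \<omega>) \<partial>M)"
      by (intro Bochner_Integration.integral_cong refl) (simp add: rep)
    finally show ?thesis .
  qed
  have limsp: "\<And>x. x \<in> space M \<Longrightarrow> (\<lambda>j. s j x) \<longlonglongrightarrow> u x" using s_lim hist_space by simp
  have intc: "integrable M (\<lambda>\<omega>. B * (2 * c))" by simp
  have L1: "(\<lambda>j. \<integral>\<omega>. w \<omega> * (s j \<omega> \<bullet> ?Y \<omega>) \<partial>M) \<longlonglongrightarrow> (\<integral>\<omega>. w \<omega> * (u \<omega> \<bullet> ?Y \<omega>) \<partial>M)"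
  proof (rule integral_dominated_convergence[OF _ _ intc])
    show "(\<lambda>\<omega>. w \<omega> * (u \<omega> \<bullet> ?Y \<omega>)) \<in> borel_measurable M"
      using wM uM Ym by (intro borel_measurable_times borel_measurable_inner)
    show "(\<lambda>\<omega>. w \<omega> * (s j \<omega> \<bullet> ?Y \<omega>)) \<in> borel_measurable M" for j
      using wM sM Ym by (intro borel_measurable_times borel_measurable_inner)
    show "AE x in M. (\<lambda>j. w x * (s j x \<bullet> ?Y x)) \<longlonglongrightarrow> w x * (u x \<bullet> ?Y x)"
      using limsp by (intro AE_I2 tendsto_mult_left tendsto_inner tendsto_const)
    show "AE x in M. norm (w x * (s j x \<bullet> ?Y x)) \<le> B * (2 * c)" for j
    proof (rule AE_I2)
      fix x assume x: "x \<in> space M"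
      have "\<bar>s j x \<bullet> ?Y x\<bar> \<le> norm (s j x) * norm (?Y x)" by (rule Cauchy_Schwarz_ineq2)
      also have "\<dots> \<le> 2 * c" using s2[OF x] Yb[OF x] by (intro mult_mono) auto
      finally have "\<bar>s j x \<bullet> ?Y x\<bar> \<le> 2 * c" .
      then have "\<bar>w x\<bar> * \<bar>s j x \<bullet> ?Y x\<bar> \<le> B * (2 * c)"
        using w0[OF x] wB[OF x] by (intro mult_mono) auto
      then show "norm (w x * (s j x \<bullet> ?Y x)) \<le> B * (2 * c)" by (simp add: abs_mult)
    qed
  qed
  have intc2: "integrable M (\<lambda>\<omega>. B * 2)" by simp
  have L2: "(\<lambda>j. \<integral>\<omega>. w \<omega> * norm (s j \<omega>) \<partial>M) \<longlonglongrightarrow> (\<integral>\<omega>. w \<omega> * norm (u \<omega>) \<partial>M)"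
  proof (rule integral_dominated_convergence[OF _ _ intc2])
    show "(\<lambda>\<omega>. w \<omega> * norm (u \<omega>)) \<in> borel_measurable M"
      using wM uM by (intro borel_measurable_times measurable_compose[OF _ borel_measurable_norm])
    show "(\<lambda>\<omega>. w \<omega> * norm (s j \<omega>)) \<in> borel_measurable M" for j
      using wM sM by (intro borel_measurable_times measurable_compose[OF _ borel_measurable_norm])
    show "AE x in M. (\<lambda>j. w x * norm (s j x)) \<longlonglongrightarrow> w x * norm (u x)"
      using limsp by (intro AE_I2 tendsto_mult_left tendsto_norm)
    show "AE x in M. norm (w x * norm (s j x)) \<le> B * 2" for j
    proof (rule AE_I2)
      fix x assume x: "x \<in> space M"
      have "\<bar>w x\<bar> * norm (s j x) \<le> B * 2"
        using w0[OF x] wB[OF x] s2[OF x] by (intro mult_mono) auto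
      then show "norm (w x * norm (s j x)) \<le> B * 2" by (simp add: abs_mult)
    qed
  qed
  have L3: "(\<lambda>j. \<tau>0 * (\<integral>\<omega>. w \<omega> * norm (s j \<omega>) \<partial>M)) \<longlonglongrightarrow> \<tau>0 * (\<integral>\<omega>. w \<omega> * norm (u \<omega>) \<partial>M)"
    by (rule tendsto_mult_left[OF L2])
  have A: "(\<integral>\<omega>. w \<omega> * (u \<omega> \<bullet> ?Y \<omega>) \<partial>M) \<le> \<tau>0 * (\<integral>\<omega>. w \<omega> * norm (u \<omega>) \<partial>M)"
    using L1 L3 key by (intro LIMSEQ_le) auto
  have intw: "integrable M w" by (rule bdd_int[OF wM, where B=B]) (metis w0 wB abs_of_nonneg)
  have intwu: "integrable M (\<lambda>\<omega>. w \<omega> * norm (u \<omega>))"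
  proof (rule bdd_int[where B=B])
    show "(\<lambda>\<omega>. w \<omega> * norm (u \<omega>)) \<in> borel_measurable M"
      using wM uM by (intro borel_measurable_times measurable_compose[OF _ borel_measurable_norm])
    fix x assume x: "x \<in> space M"
    have "\<bar>w x\<bar> * norm (u x) \<le> B * 1" using w0[OF x] wB[OF x] u1[OF x] by (intro mult_mono) auto
    then show "\<bar>w x * norm (u x)\<bar> \<le> B" by (simp add: abs_mult)
  qed
  have "(\<integral>\<omega>. w \<omega> * norm (u \<omega>) \<partial>M) \<le> (\<integral>\<omega>. w \<omega> \<partial>M)"
  proof (rule integral_mono[OF intwu intw])
    fix x assume x: "x \<in> space M"
    show "w x * norm (u x) \<le> w x" using w0[OF x] u1[OF x] by (metis mult_left_le)
  qed
  then have "\<tau>0 * (\<integral>\<omega>. w \<omega> * norm (u \<omega>) \<partial>M) \<le> \<tau>0 * (\<integral>\<omega>. w \<omega> \<partial>M)"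
    using tau0_nn by (rule mult_left_mono)
  with A show ?thesis by linarith
qed

end


lemma cont_meas: "continuous_on UNIV f \<Longrightarrow> T \<in> borel_measurable N \<Longrightarrow> (\<lambda>\<omega>. f (T \<omega>)) \<in> borel_measurable N"
  by (rule measurable_compose[OF _ borel_measurable_continuous_onI])

lemma hh_meas: "T \<in> borel_measurable N \<Longrightarrow> (\<lambda>\<omega>. hh \<mu> (T \<omega>)) \<in> borel_measurable N"
  by (rule cont_meas) (unfold hh_def, intro continuous_intros)

lemma Phi_meas: "T \<in> borel_measurable N \<Longrightarrow> (\<lambda>\<omega>. Phi \<mu> (T \<omega>)) \<in> borel_measurable N"
  by (rule cont_meas) (unfold Phi_def hh_def, intro continuous_intros)

lemma u_meas: fixes T :: "'b \<Rightarrow> 'c::{real_inner, second_countable_topology}"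
  assumes T: "T \<in> borel_measurable N"
  shows "(\<lambda>\<omega>. T \<omega> /\<^sub>R hh \<mu> (T \<omega>)) \<in> borel_measurable N"
proof -
  have h: "(\<lambda>\<omega>. inverse (hh \<mu> (T \<omega>))) \<in> borel_measurable N"
    using hh_meas[OF T] by (rule borel_measurable_inverse)
  show ?thesis using h T by (rule borel_measurable_scaleR)
qed

lemma Phi_pos: "Phi \<mu> x > 0" unfolding Phi_def by simp

lemma Phi_le: "\<mu> > 0 \<Longrightarrow> norm x \<le> R \<Longrightarrow> Phi \<mu> x \<le> exp (\<mu> * (R + 1/\<mu>))"
  unfolding Phi_def using hh_le[of \<mu> x] by (simp add: mult_left_mono)

context tmix begin

lemma step:
  assumes i: "i \<ge> 1"
    and Tm: "T \<in> borel_measurable (hist M X i)"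
    and Tb: "\<And>\<omega>. \<omega> \<in> space M \<Longrightarrow> norm (T \<omega>) \<le> R"
    and mu: "\<mu> > 0" "\<mu> * c \<le> 1/2"
  shows "(\<integral>\<omega>. Phi \<mu> (T \<omega> + X (i+k) \<omega>) \<partial>M)
          \<le> (\<integral>\<omega>. Phi \<mu> (T \<omega>) \<partial>M) * (1 + \<mu> * \<tau>0 + 3 * \<mu>^2 * (\<sigma>^2 + 2*c*\<tau>0))"
proof -
  let ?Y = "X (i+k)"
  define w where "w \<omega> = Phi \<mu> (T \<omega>)" for \<omega>
  define u where "u \<omega> = T \<omega> /\<^sub>R hh \<mu> (T \<omega>)" for \<omega>
  define B where "B = exp (\<mu> * (R + 1/\<mu>))"
  have i1: "i + k \<ge> 1" using i by simp
  have Ym: "?Y \<in> borel_measurable M" by (rule Xmeas[OF i1])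
  have Yb: "\<And>\<omega>. \<omega> \<in> space M \<Longrightarrow> norm (?Y \<omega>) \<le> c" by (rule Xbnd[OF i1])
  have TM: "T \<in> borel_measurable M" by (rule meas_from_hist[OF Tm])
  have wm: "w \<in> borel_measurable (hist M X i)" unfolding w_def by (rule Phi_meas[OF Tm])
  have wM: "w \<in> borel_measurable M" by (rule meas_from_hist[OF wm])
  have um: "u \<in> borel_measurable (hist M X i)" unfolding u_def by (rule u_meas[OF Tm])
  have w0: "\<And>\<omega>. \<omega> \<in> space M \<Longrightarrow> 0 \<le> w \<omega>" unfolding w_def using Phi_pos less_imp_le by blast
  have wB: "\<And>\<omega>. \<omega> \<in> space M \<Longrightarrow> w \<omega> \<le> B" unfolding w_def B_def using Phi_le[OF mu(1) Tb] by blast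
  have u1: "\<And>\<omega>. \<omega> \<in> space M \<Longrightarrow> norm (u \<omega>) \<le> 1"
  proof -
    fix \<omega>
    have hp: "hh \<mu> (T \<omega>) > 0" using hh_pos[OF mu(1), of "T \<omega>"] mu(1)
      by (meson divide_pos_pos less_le_trans zero_less_one)
    have "norm (u \<omega>) = norm (T \<omega>) / hh \<mu> (T \<omega>)" unfolding u_def using hp by (simp add: divide_inverse mult.commute)
    also have "\<dots> \<le> 1" using hp hh_ge_norm[of "T \<omega>" \<mu>] by simp
    finally show "norm (u \<omega>) \<le> 1" .
  qed
  have pw: "Phi \<mu> (T \<omega> + ?Y \<omega>) \<le> w \<omega> + \<mu> * (w \<omega> * (u \<omega> \<bullet> ?Y \<omega>)) + 3 * \<mu>^2 * (w \<omega> * (norm (?Y \<omega>))^2)"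
    if om: "\<omega> \<in> space M" for \<omega>
  proof -
    have "\<mu> * norm (?Y \<omega>) \<le> \<mu> * c" using Yb[OF om] mu(1) by (intro mult_left_mono) auto
    then have "\<mu> * norm (?Y \<omega>) \<le> 1/2" using mu(2) by linarith
    from pointwise[OF mu(1) this, of "T \<omega>"]
    have "Phi \<mu> (T \<omega> + ?Y \<omega>) \<le> w \<omega> * (1 + \<mu> * (u \<omega> \<bullet> ?Y \<omega>) + 3 * \<mu>^2 * (norm (?Y \<omega>))^2)"
      unfolding w_def u_def .
    also have "\<dots> = w \<omega> + \<mu> * (w \<omega> * (u \<omega> \<bullet> ?Y \<omega>)) + 3 * \<mu>^2 * (w \<omega> * (norm (?Y \<omega>))^2)"
      by (simp add: algebra_simps)
    finally show ?thesis .
  qed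
  have intw: "integrable M w" by (rule bdd_int[OF wM, where B=B]) (metis w0 wB abs_of_nonneg)
  have int1: "integrable M (\<lambda>\<omega>. w \<omega> * (u \<omega> \<bullet> ?Y \<omega>))"
  proof (rule bdd_int[where B="B*c"])
    show "(\<lambda>\<omega>. w \<omega> * (u \<omega> \<bullet> ?Y \<omega>)) \<in> borel_measurable M"
      using wM meas_from_hist[OF um] Ym by (intro borel_measurable_times borel_measurable_inner)
    fix x assume x: "x \<in> space M"
    have "\<bar>u x \<bullet> ?Y x\<bar> \<le> norm (u x) * norm (?Y x)" by (rule Cauchy_Schwarz_ineq2)
    also have "\<dots> \<le> 1 * c" using u1[OF x] Yb[OF x] by (intro mult_mono) auto
    finally have "\<bar>w x\<bar> * \<bar>u x \<bullet> ?Y x\<bar> \<le> B * c" using w0[OF x] wB[OF x] by (intro mult_mono) auto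
    then show "\<bar>w x * (u x \<bullet> ?Y x)\<bar> \<le> B * c" by (simp add: abs_mult)
  qed
  have int2: "integrable M (\<lambda>\<omega>. w \<omega> * (norm (?Y \<omega>))^2)"
  proof (rule bdd_int[where B="B*c^2"])
    show "(\<lambda>\<omega>. w \<omega> * (norm (?Y \<omega>))^2) \<in> borel_measurable M"
      using wM Ym by (intro borel_measurable_times borel_measurable_power measurable_compose[OF _ borel_measurable_norm])
    fix x assume x: "x \<in> space M"
    have "\<bar>w x\<bar> * (norm (?Y x))^2 \<le> B * c^2" using w0[OF x] wB[OF x] Yb[OF x]
      by (intro mult_mono power_mono) auto
    then show "\<bar>w x * (norm (?Y x))^2\<bar> \<le> B * c^2" by (simp add: abs_mult)
  qed
  have intL: "integrable M (\<lambda>\<omega>. Phi \<mu> (T \<omega> + ?Y \<omega>))"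
  proof (rule bdd_int[where B="exp (\<mu> * ((R + c) + 1/\<mu>))"])
    show "(\<lambda>\<omega>. Phi \<mu> (T \<omega> + ?Y \<omega>)) \<in> borel_measurable M"
      using TM Ym by (intro Phi_meas borel_measurable_add)
    fix x assume x: "x \<in> space M"
    have "norm (T x + ?Y x) \<le> R + c" using Tb[OF x] Yb[OF x] norm_triangle_ineq[of "T x" "?Y x"] by linarith
    then show "\<bar>Phi \<mu> (T x + ?Y x)\<bar> \<le> exp (\<mu> * ((R + c) + 1/\<mu>))"
      using Phi_le[OF mu(1)] Phi_pos by (metis abs_of_pos)
  qed
  have "(\<integral>\<omega>. Phi \<mu> (T \<omega> + ?Y \<omega>) \<partial>M)
      \<le> (\<integral>\<omega>. w \<omega> + \<mu> * (w \<omega> * (u \<omega> \<bullet> ?Y \<omega>)) + 3 * \<mu>^2 * (w \<omega> * (norm (?Y \<omega>))^2) \<partial>M)"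
    using intL intw int1 int2 pw by (intro integral_mono) auto
  also have "\<dots> = (\<integral>\<omega>. w \<omega> \<partial>M) + \<mu> * (\<integral>\<omega>. w \<omega> * (u \<omega> \<bullet> ?Y \<omega>) \<partial>M) + 3 * \<mu>^2 * (\<integral>\<omega>. w \<omega> * (norm (?Y \<omega>))^2 \<partial>M)"
    using intw int1 int2 by simp
  also have "\<dots> \<le> (\<integral>\<omega>. w \<omega> \<partial>M) + \<mu> * (\<tau>0 * (\<integral>\<omega>. w \<omega> \<partial>M)) + 3 * \<mu>^2 * ((\<integral>\<omega>. w \<omega> \<partial>M) * (\<sigma>^2 + 2*c*\<tau>0))"
  proof -
    have a: "(\<integral>\<omega>. w \<omega> * (u \<omega> \<bullet> ?Y \<omega>) \<partial>M) \<le> \<tau>0 * (\<integral>\<omega>. w \<omega> \<partial>M)"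
      by (rule rand_dir[OF i wm w0 wB um u1])
    have b: "(\<integral>\<omega>. w \<omega> * (norm (?Y \<omega>))^2 \<partial>M) \<le> (\<integral>\<omega>. w \<omega> \<partial>M) * (\<sigma>^2 + 2*c*\<tau>0)"
      by (rule cor_sq[OF i wm w0 wB])
    have "\<mu> * (\<integral>\<omega>. w \<omega> * (u \<omega> \<bullet> ?Y \<omega>) \<partial>M) \<le> \<mu> * (\<tau>0 * (\<integral>\<omega>. w \<omega> \<partial>M))"
      using a mu(1) by (intro mult_left_mono) auto
    moreover have "3 * \<mu>^2 * (\<integral>\<omega>. w \<omega> * (norm (?Y \<omega>))^2 \<partial>M) \<le> 3 * \<mu>^2 * ((\<integral>\<omega>. w \<omega> \<partial>M) * (\<sigma>^2 + 2*c*\<tau>0))"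
      using b by (intro mult_left_mono) auto
    ultimately show ?thesis by linarith
  qed
  also have "\<dots> = (\<integral>\<omega>. Phi \<mu> (T \<omega>) \<partial>M) * (1 + \<mu> * \<tau>0 + 3 * \<mu>^2 * (\<sigma>^2 + 2*c*\<tau>0))"
    unfolding w_def by (simp add: algebra_simps)
  finally show ?thesis .
qed

lemma step0:
  assumes j: "j \<ge> 1" and mu: "\<mu> > 0" "\<mu> * c \<le> 1/2"
  shows "(\<integral>\<omega>. Phi \<mu> (X j \<omega>) \<partial>M) \<le> exp 1 * (1 + 3 * \<mu>^2 * \<sigma>^2)"
proof -
  have Ym: "X j \<in> borel_measurable M" by (rule Xmeas[OF j])
  have Yb: "\<And>\<omega>. \<omega> \<in> space M \<Longrightarrow> norm (X j \<omega>) \<le> c" by (rule Xbnd[OF j])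
  have pw: "Phi \<mu> (X j \<omega>) \<le> exp 1 + 3 * \<mu>^2 * exp 1 * (norm (X j \<omega>))^2" if om: "\<omega> \<in> space M" for \<omega>
  proof -
    have "\<mu> * norm (X j \<omega>) \<le> \<mu> * c" using Yb[OF om] mu(1) by (intro mult_left_mono) auto
    then have "\<mu> * norm (X j \<omega>) \<le> 1/2" using mu(2) by linarith
    from pointwise[OF mu(1) this, of 0]
    show ?thesis by (simp add: Phi_0[OF mu(1)] algebra_simps)
  qed
  have int2: "integrable M (\<lambda>\<omega>. (norm (X j \<omega>))^2)"
  proof (rule bdd_int[where B="c^2"])
    show "(\<lambda>\<omega>. (norm (X j \<omega>))^2) \<in> borel_measurable M"
      using Ym by (intro borel_measurable_power measurable_compose[OF _ borel_measurable_norm])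
    fix x assume x: "x \<in> space M"
    show "\<bar>(norm (X j x))^2\<bar> \<le> c^2" using Yb[OF x] by (simp add: power_mono)
  qed
  have intL: "integrable M (\<lambda>\<omega>. Phi \<mu> (X j \<omega>))"
  proof (rule bdd_int[where B="exp (\<mu> * (c + 1/\<mu>))"])
    show "(\<lambda>\<omega>. Phi \<mu> (X j \<omega>)) \<in> borel_measurable M" using Ym by (rule Phi_meas)
    fix x assume x: "x \<in> space M"
    show "\<bar>Phi \<mu> (X j x)\<bar> \<le> exp (\<mu> * (c + 1/\<mu>))"
      using Phi_le[OF mu(1) Yb[OF x]] Phi_pos by (metis abs_of_pos)
  qed
  have "(\<integral>\<omega>. Phi \<mu> (X j \<omega>) \<partial>M) \<le> (\<integral>\<omega>. exp 1 + 3 * \<mu>^2 * exp 1 * (norm (X j \<omega>))^2 \<partial>M)"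
    using intL int2 pw by (intro integral_mono) auto
  also have "\<dots> = exp 1 + 3 * \<mu>^2 * exp 1 * (\<integral>\<omega>. (norm (X j \<omega>))^2 \<partial>M)"
    using int2 by (simp add: prob_space)
  also have "\<dots> \<le> exp 1 + 3 * \<mu>^2 * exp 1 * \<sigma>^2"
    using Xvar[OF j] by (intro add_left_mono mult_left_mono) auto
  also have "\<dots> = exp 1 * (1 + 3 * \<mu>^2 * \<sigma>^2)" by (simp add: algebra_simps)
  finally show ?thesis .
qed

end


context tmix begin

lemma iter:
  assumes r: "r \<ge> 1" and mu: "\<mu> > 0" "\<mu> * c \<le> 1/2"
  shows "(\<integral>\<omega>. Phi \<mu> (\<Sum>j\<le>m. X (r + j*k) \<omega>) \<partial>M)
           \<le> exp 1 * (1 + (\<mu> * \<tau>0 + 3 * \<mu>^2 * (\<sigma>^2 + 2*c*\<tau>0))) ^ Suc m"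
proof (induction m)
  case 0
  have "(\<integral>\<omega>. Phi \<mu> (\<Sum>j\<le>0. X (r + j*k) \<omega>) \<partial>M) = (\<integral>\<omega>. Phi \<mu> (X r \<omega>) \<partial>M)" by simp
  also have "\<dots> \<le> exp 1 * (1 + 3 * \<mu>^2 * \<sigma>^2)" by (rule step0[OF r mu])
  also have "\<dots> \<le> exp 1 * (1 + (\<mu> * \<tau>0 + 3 * \<mu>^2 * (\<sigma>^2 + 2*c*\<tau>0)))"
  proof -
    have "0 \<le> \<mu> * \<tau>0 + 3 * \<mu>^2 * (2*c*\<tau>0)" using mu(1) c_pos tau0_nn by simp
    then have "1 + 3 * \<mu>^2 * \<sigma>^2 \<le> 1 + (\<mu> * \<tau>0 + 3 * \<mu>^2 * (\<sigma>^2 + 2*c*\<tau>0))"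
      by (simp add: algebra_simps)
    then show ?thesis by (intro mult_left_mono) auto
  qed
  finally show ?case by simp
next
  case (Suc m)
  define T where "T \<omega> = (\<Sum>j\<le>m. X (r + j*k) \<omega>)" for \<omega>
  define q where "q = \<mu> * \<tau>0 + 3 * \<mu>^2 * (\<sigma>^2 + 2*c*\<tau>0)"
  have q0: "q \<ge> 0" unfolding q_def using mu(1) c_pos tau0_nn by simp
  have i1: "r + m*k \<ge> 1" using r by simp
  have Tm: "T \<in> borel_measurable (hist M X (r + m*k))"
    unfolding T_def
  proof (rule borel_measurable_sum)
    fix j assume "j \<in> {..m}"
    then have "j * k \<le> m * k" by (simp add: mult_right_mono)
    then show "X (r + j*k) \<in> borel_measurable (hist M X (r + m*k))"
      using r by (intro X_hist) auto
  qed
  have Tb: "norm (T \<omega>) \<le> real (Suc m) * c" if om: "\<omega> \<in> space M" for \<omega>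
  proof -
    have "norm (T \<omega>) \<le> (\<Sum>j\<le>m. norm (X (r + j*k) \<omega>))" unfolding T_def by (rule norm_sum)
    also have "\<dots> \<le> (\<Sum>j\<le>m. c)" using r om by (intro sum_mono Xbnd) auto
    also have "\<dots> = real (Suc m) * c" by simp
    finally show ?thesis .
  qed
  have eq: "(\<Sum>j\<le>Suc m. X (r + j*k) \<omega>) = T \<omega> + X ((r + m*k) + k) \<omega>" for \<omega>
    unfolding T_def by (simp add: algebra_simps)
  have "(\<integral>\<omega>. Phi \<mu> (\<Sum>j\<le>Suc m. X (r + j*k) \<omega>) \<partial>M) = (\<integral>\<omega>. Phi \<mu> (T \<omega> + X ((r + m*k) + k) \<omega>) \<partial>M)"
    unfolding eq ..
  also have "\<dots> \<le> (\<integral>\<omega>. Phi \<mu> (T \<omega>) \<partial>M) * (1 + q)"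
    unfolding q_def using step[OF i1 Tm Tb mu] by (simp add: add.assoc)
  also have "\<dots> \<le> exp 1 * (1 + q) ^ Suc m * (1 + q)"
    using Suc.IH q0 unfolding T_def q_def by (intro mult_right_mono) auto
  finally show ?case unfolding q_def by (simp add: mult_ac)
qed


lemma subseq_bound:
  assumes r: "r \<ge> 1" and mu: "\<mu> > 0" "\<mu> * c \<le> 1/2"
  shows "(\<integral>\<omega>. exp (\<mu> * norm (\<Sum>j\<le>m. X (r + j*k) \<omega>)) \<partial>M)
           \<le> exp 1 * exp (real (Suc m) * (\<mu> * \<tau>0 + 3 * \<mu>^2 * (\<sigma>^2 + 2*c*\<tau>0)))"
proof -
  define T where "T \<omega> = (\<Sum>j\<le>m. X (r + j*k) \<omega>)" for \<omega>
  define q where "q = \<mu> * \<tau>0 + 3 * \<mu>^2 * (\<sigma>^2 + 2*c*\<tau>0)"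
  have q0: "q \<ge> 0" unfolding q_def using mu(1) c_pos tau0_nn by simp
  have TM: "T \<in> borel_measurable M" unfolding T_def using r by (intro borel_measurable_sum Xmeas) auto
  have Tb: "norm (T \<omega>) \<le> real (Suc m) * c" if om: "\<omega> \<in> space M" for \<omega>
  proof -
    have "norm (T \<omega>) \<le> (\<Sum>j\<le>m. norm (X (r + j*k) \<omega>))" unfolding T_def by (rule norm_sum)
    also have "\<dots> \<le> (\<Sum>j\<le>m. c)" using r om by (intro sum_mono Xbnd) auto
    also have "\<dots> = real (Suc m) * c" by simp
    finally show ?thesis .
  qed
  have int1: "integrable M (\<lambda>\<omega>. exp (\<mu> * norm (T \<omega>)))"
  proof (rule bdd_int[where B="exp (\<mu> * (real (Suc m) * c))"])
    show "(\<lambda>\<omega>. exp (\<mu> * norm (T \<omega>))) \<in> borel_measurable M"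
      by (rule cont_meas[OF _ TM]) (intro continuous_intros)
    fix x assume x: "x \<in> space M"
    show "\<bar>exp (\<mu> * norm (T x))\<bar> \<le> exp (\<mu> * (real (Suc m) * c))"
      using Tb[OF x] mu(1) by (simp add: mult_left_mono)
  qed
  have int2: "integrable M (\<lambda>\<omega>. Phi \<mu> (T \<omega>))"
  proof (rule bdd_int[where B="exp (\<mu> * (real (Suc m) * c + 1/\<mu>))"])
    show "(\<lambda>\<omega>. Phi \<mu> (T \<omega>)) \<in> borel_measurable M" by (rule Phi_meas[OF TM])
    fix x assume x: "x \<in> space M"
    show "\<bar>Phi \<mu> (T x)\<bar> \<le> exp (\<mu> * (real (Suc m) * c + 1/\<mu>))"
      using Phi_le[OF mu(1) Tb[OF x]] Phi_pos by (metis abs_of_pos)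
  qed
  have "(\<integral>\<omega>. exp (\<mu> * norm (T \<omega>)) \<partial>M) \<le> (\<integral>\<omega>. Phi \<mu> (T \<omega>) \<partial>M)"
  proof (rule integral_mono[OF int1 int2])
    fix x show "exp (\<mu> * norm (T x)) \<le> Phi \<mu> (T x)"
      unfolding Phi_def using hh_ge_norm[of "T x" \<mu>] mu(1) by (simp add: mult_left_mono)
  qed
  also have "\<dots> \<le> exp 1 * (1 + q) ^ Suc m" unfolding T_def q_def by (rule iter[OF r mu])
  also have "(1 + q) ^ Suc m \<le> exp q ^ Suc m" using q0 by (intro power_mono) (auto simp: add.commute)
  also have "exp q ^ Suc m = exp (real (Suc m) * q)" by (rule exp_of_nat_mult[symmetric])
  finally show ?thesis unfolding T_def q_def by simp
qed

end


lemma decomp: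
  fixes f :: "nat \<Rightarrow> 'b::comm_monoid_add" and n k :: nat
  assumes k1: "k \<ge> 1" and kn: "k \<le> n"
  shows "(\<Sum>i\<in>{1..n}. f i) = (\<Sum>r\<in>{1..k}. \<Sum>j<(n - r) div k + 1. f (r + j*k))"
proof -
  have k0: "k > 0" using k1 by simp
  have S: "(\<Sum>r\<in>{1..k}. \<Sum>j<(n - r) div k + 1. f (r + j*k))
        = (\<Sum>(r,j)\<in>Sigma {1..k} (\<lambda>r. {..<(n - r) div k + 1}). f (r + j*k))"
    by (rule sum.Sigma) auto
  have "(\<Sum>i\<in>{1..n}. f i) = (\<Sum>(r,j)\<in>Sigma {1..k} (\<lambda>r. {..<(n - r) div k + 1}). f (r + j*k))"
  proof (rule sum.reindex_bij_witness[where i="\<lambda>(r,j). r + j*k" and j="\<lambda>a. ((a - 1) mod k + 1, (a - 1) div k)"])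
    fix a assume a: "a \<in> {1..n}"
    have dm: "(a - 1) div k * k + (a - 1) mod k = a - 1" by (rule div_mult_mod_eq)
    show "(case ((a - 1) mod k + 1, (a - 1) div k) of (r, j) \<Rightarrow> r + j * k) = a"
      using dm a by simp
    have m: "(a - 1) mod k < k" using k0 by simp
    have a1: "1 \<le> a" "a \<le> n" using a by auto
    have "(a - 1) div k * k \<le> n - ((a - 1) mod k + 1)" using dm a1 by linarith
    then have "(a - 1) div k \<le> (n - ((a - 1) mod k + 1)) div k"
      using k0 by (simp add: less_eq_div_iff_mult_less_eq)
    then show "((a - 1) mod k + 1, (a - 1) div k) \<in> Sigma {1..k} (\<lambda>r. {..<(n - r) div k + 1})"
      using m by auto
    show "(case ((a - 1) mod k + 1, (a - 1) div k) of (r, j) \<Rightarrow> f (r + j * k)) = f a"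
      using dm a by simp
  next
    fix b assume b: "b \<in> Sigma {1..k} (\<lambda>r. {..<(n - r) div k + 1})"
    then obtain r j where b': "b = (r, j)" "1 \<le> r" "r \<le> k" "j < (n - r) div k + 1" by auto
    have e: "r + j * k - 1 = (r - 1) + j * k" using b' by simp
    have "(r - 1) mod k = r - 1" "(r - 1) div k = 0" using b' by auto
    have m1: "(r + j * k - 1) mod k = r - 1" unfolding e using \<open>(r - 1) mod k = r - 1\<close>
      by (simp only: mod_mult_self1)
    have d1: "(r + j * k - 1) div k = j" unfolding e using \<open>(r - 1) div k = 0\<close> k0
      by (simp only: div_mult_self1)
    show "(((case b of (r, j) \<Rightarrow> r + j * k) - 1) mod k + 1, ((case b of (r, j) \<Rightarrow> r + j * k) - 1) div k) = b"
      using b'(1,2) m1 d1 by simp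
    have "j \<le> (n - r) div k" using b' by simp
    then have "j * k \<le> n - r" using k0 by (simp add: less_eq_div_iff_mult_less_eq)
    then show "(case b of (r, j) \<Rightarrow> r + j * k) \<in> {1..n}" using b' kn by auto
  qed
  then show ?thesis using S by simp
qed



lemma arith_final:
  fixes L s a \<tau>0 lam :: real
  assumes L1: "L \<ge> 1" and s: "s > 0" and a: "a > 0" and t1: "\<tau>0 \<le> a + s" and t0: "\<tau>0 \<ge> 0"
    and lam: "lam = 1 / (2* s + 2*a)"
  shows "1 + (4 * lam * \<tau>0 + 3 * lam^2 * s^2) - lam * (L * (13* s + 21*a)) \<le> - L"
proof -
  define D where "D = 2* s + 2*a"
  have D0: "D > 0" unfolding D_def using s a by simp
  have lD: "lam * D = 1" unfolding lam D_def[symmetric] using D0 by simp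
  have l0: "lam > 0" unfolding lam D_def[symmetric] using D0 by simp
  have A: "L * (13* s + 21*a) - 4 * \<tau>0 \<ge> 4.5 * L * D"
  proof -
    have "4 * \<tau>0 \<le> 4 * (a + s)" using t1 by simp
    also have "\<dots> \<le> 1 * (4 * s + 12*a)" using s a by simp
    also have "\<dots> \<le> L * (4 * s + 12*a)" using L1 s a by (intro mult_right_mono) auto
    finally have X1: "4 * \<tau>0 \<le> 4 * (L * s) + 12 * (L * a)" by (simp add: algebra_simps)
    have X2: "L * (13* s + 21*a) - 4 * \<tau>0 - 4.5 * L * D = 13 * (L * s) + 21 * (L * a) - 4 * \<tau>0 - 9 * (L * s) - 9 * (L * a)"
      unfolding D_def by (simp add: algebra_simps)
    show ?thesis using X1 X2 by linarith
  qed
  have B: "lam * (L * (13* s + 21*a)) - 4 * lam * \<tau>0 \<ge> 4.5 * L"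
  proof -
    have "lam * (L * (13* s + 21*a) - 4 * \<tau>0) \<ge> lam * (4.5 * L * D)" using A l0 by (intro mult_left_mono) auto
    also have "lam * (4.5 * L * D) = 4.5 * L" using lD by (simp add: algebra_simps)
    finally show ?thesis by (simp add: algebra_simps)
  qed
  have C: "lam * s \<le> 1/2"
  proof -
    have "lam * s \<le> lam * (D/2)" using l0 a unfolding D_def by (intro mult_left_mono) auto
    also have "\<dots> = 1/2" using lD by simp
    finally show ?thesis .
  qed
  have C2: "3 * lam^2 * s^2 \<le> 3/4"
  proof -
    have "(lam * s)^2 \<le> (1/2)^2" using C l0 s by (intro power_mono) auto
    then have "lam^2 * s^2 \<le> 1/4" by (simp add: power_mult_distrib power2_eq_square mult_ac)
    then show ?thesis by simp
  qed
  show ?thesis using B C2 L1 by linarith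
qed

context tmix begin

lemma caseB:
  assumes n1: "n \<ge> 1" and l1: "l \<ge> 1" and ln: "l \<le> n" and kdef: "k = n div l" and sig: "\<sigma> > 0"
    and tdef: "\<tau>0 = max (c / real l) (\<sigma> / sqrt (real l))" and L1: "L \<ge> 1"
  shows "measure M {\<omega> \<in> space M. norm ((1 / real n) *\<^sub>R (\<Sum>i=1..n. X i \<omega>))
             \<le> L * (13 * \<sigma> / sqrt (real l) + 21 * c / real l)} \<ge> 1 - exp (- L)"
proof -
  define a where "a = c / real l"
  define s where "s = \<sigma> / sqrt (real l)"
  define lam where "lam = 1 / (2* s + 2*a)"
  define t where "t = L * (13 * \<sigma> / sqrt (real l) + 21 * c / real l)"
  define Mr where "Mr r = (n - r) div k + 1" for r
  define \<mu> where "\<mu> r = lam / real (Mr r)" for r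
  define T where "T r \<omega> = (\<Sum>j\<le>(n - r) div k. X (r + j*k) \<omega>)" for r \<omega>
  define S where "S \<omega> = (1 / real n) *\<^sub>R (\<Sum>i=1..n. X i \<omega>)" for \<omega>
  define q where "q = 4 * lam * \<tau>0 + 3 * lam^2 * s^2"
  define K where "K = exp 1 * exp q"
  have a0: "a > 0" unfolding a_def using c_pos l1 by simp
  have s0: "s > 0" unfolding s_def using sig l1 by simp
  have l0: "lam > 0" unfolding lam_def using a0 s0 by simp
  have t_eq: "t = L * (13* s + 21*a)" unfolding t_def s_def a_def by simp
  have t0: "\<tau>0 \<ge> 0" by (rule tau0_nn)
  have t1: "\<tau>0 \<le> a + s" unfolding tdef a_def s_def using a0 s0 unfolding a_def s_def by simp
  have k1: "k \<ge> 1"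
  proof -
    have "l div l \<le> n div l" by (rule div_le_mono[OF ln])
    then show ?thesis unfolding kdef using l1 by simp
  qed
  have kn: "k \<le> n" unfolding kdef by simp
  have kl: "k * l \<le> n" unfolding kdef by (simp add: div_times_less_eq_dividend)
  have Mr_ge: "l \<le> Mr r" if r: "r \<in> {1..k}" for r
  proof -
    have "(l - 1) * k \<le> n - r"
    proof -
      have "(l - 1) * k = k * l - k" by (simp add: algebra_simps)
      then show ?thesis using kl r by auto
    qed
    then have "l - 1 \<le> (n - r) div k" using k1 by (simp add: less_eq_div_iff_mult_less_eq)
    then show ?thesis unfolding Mr_def by simp
  qed
  have Mr0: "real (Mr r) > 0" for r unfolding Mr_def by simp
  have sumM: "(\<Sum>r\<in>{1..k}. real (Mr r)) = real n"
  proof -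
    have "(\<Sum>i\<in>{1..n}. (1::real)) = (\<Sum>r\<in>{1..k}. \<Sum>j<(n - r) div k + 1. (1::real))"
      by (rule decomp[OF k1 kn])
    then show ?thesis unfolding Mr_def by simp
  qed
  have decS: "(\<Sum>i=1..n. X i \<omega>) = (\<Sum>r\<in>{1..k}. T r \<omega>)" for \<omega>
  proof -
    have "(\<Sum>i=1..n. X i \<omega>) = (\<Sum>r\<in>{1..k}. \<Sum>j<(n - r) div k + 1. X (r + j*k) \<omega>)"
      by (rule decomp[OF k1 kn])
    also have "\<dots> = (\<Sum>r\<in>{1..k}. T r \<omega>)" unfolding T_def
      by (intro sum.cong refl) (simp add: lessThan_Suc_atMost)
    finally show ?thesis .
  qed
  have n0: "real n > 0" using n1 by simp
  have mu_pos: "\<mu> r > 0" for r unfolding \<mu>_def using l0 Mr0[of r] by simp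
  have lam_le: "lam * c \<le> real l / 2"
  proof -
    have "lam \<le> 1 / (2*a)" unfolding lam_def using a0 s0 by (intro divide_left_mono) auto
    then have "lam * c \<le> 1 / (2*a) * c" using c_pos by (intro mult_right_mono) auto
    also have "1 / (2*a) * c = real l / 2" unfolding a_def using c_pos l1 by simp
    finally show ?thesis .
  qed
  have mu_c: "\<mu> r * c \<le> 1/2" if r: "r \<in> {1..k}" for r
  proof -
    have "\<mu> r * c = (lam * c) / real (Mr r)" unfolding \<mu>_def by simp
    also have "\<dots> \<le> (real l / 2) / real (Mr r)" using lam_le Mr0[of r] by (intro divide_right_mono) auto
    also have "\<dots> \<le> 1/2" using Mr_ge[OF r] Mr0[of r] by (simp add: divide_le_eq)
    finally show ?thesis .
  qed
  have TM: "T r \<in> borel_measurable M" if r: "r \<in> {1..k}" for r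
    unfolding T_def using r by (intro borel_measurable_sum Xmeas) auto
  have Tb: "norm (T r \<omega>) \<le> real (Mr r) * c" if r: "r \<in> {1..k}" and om: "\<omega> \<in> space M" for r \<omega>
  proof -
    have "norm (T r \<omega>) \<le> (\<Sum>j\<le>(n - r) div k. norm (X (r + j*k) \<omega>))" unfolding T_def by (rule norm_sum)
    also have "\<dots> \<le> (\<Sum>j\<le>(n - r) div k. c)" using r om by (intro sum_mono Xbnd) auto
    also have "\<dots> = real (Mr r) * c" unfolding Mr_def by simp
    finally show ?thesis .
  qed
  have intT: "integrable M (\<lambda>\<omega>. exp (\<mu> r * norm (T r \<omega>)))" if r: "r \<in> {1..k}" for r
  proof (rule bdd_int[where B="exp (\<mu> r * (real (Mr r) * c))"])
    show "(\<lambda>\<omega>. exp (\<mu> r * norm (T r \<omega>))) \<in> borel_measurable M"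
      by (rule cont_meas[OF _ TM[OF r]]) (intro continuous_intros)
    fix x assume x: "x \<in> space M"
    show "\<bar>exp (\<mu> r * norm (T r x))\<bar> \<le> exp (\<mu> r * (real (Mr r) * c))"
      using Tb[OF r x] mu_pos[of r] by (simp add: mult_left_mono)
  qed
  have Tbound: "(\<integral>\<omega>. exp (\<mu> r * norm (T r \<omega>)) \<partial>M) \<le> K" if r: "r \<in> {1..k}" for r
  proof -
    have r1: "r \<ge> 1" using r by simp
    have "(\<integral>\<omega>. exp (\<mu> r * norm (T r \<omega>)) \<partial>M)
        \<le> exp 1 * exp (real (Suc ((n - r) div k)) * (\<mu> r * \<tau>0 + 3 * (\<mu> r)^2 * (\<sigma>^2 + 2*c*\<tau>0)))"
      unfolding T_def by (rule subseq_bound[OF r1 mu_pos mu_c[OF r]])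
    also have "real (Suc ((n - r) div k)) = real (Mr r)" unfolding Mr_def by simp
    also have "real (Mr r) * (\<mu> r * \<tau>0 + 3 * (\<mu> r)^2 * (\<sigma>^2 + 2*c*\<tau>0)) \<le> q"
    proof -
      define m' where "m' = real (Mr r)"
      have m'0: "m' > 0" unfolding m'_def by (rule Mr0)
      have ml: "real l \<le> m'" unfolding m'_def using Mr_ge[OF r] by simp
      have mu_eq: "\<mu> r = lam / m'" unfolding \<mu>_def m'_def ..
      have e: "m' * (\<mu> r * \<tau>0 + 3 * (\<mu> r)^2 * (\<sigma>^2 + 2*c*\<tau>0))
               = lam * \<tau>0 + 3 * (lam^2 * (\<sigma>^2 / m')) + 6 * lam * (\<mu> r * c) * \<tau>0"
        unfolding mu_eq using m'0 by (simp add: field_simps power2_eq_square)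
      have s2: "s^2 = \<sigma>^2 / real l" unfolding s_def using l1 by (simp add: power_divide)
      have "\<sigma>^2 / m' \<le> \<sigma>^2 / real l" using ml l1 by (intro divide_left_mono) auto
      then have A0: "lam^2 * (\<sigma>^2 / m') \<le> lam^2 * s^2" unfolding s2
        by (intro mult_left_mono) auto
      have A1: "3 * (lam^2 * (\<sigma>^2 / m')) \<le> 3 * lam^2 * s^2"
        using mult_left_mono[OF A0, of 3] by (simp add: mult.assoc)
      have "6 * lam * (\<mu> r * c) * \<tau>0 \<le> 6 * lam * (1/2) * \<tau>0"
        using mu_c[OF r] l0 t0 by (intro mult_right_mono mult_left_mono) auto
      then have A2: "6 * lam * (\<mu> r * c) * \<tau>0 \<le> 3 * lam * \<tau>0" by simp
      show ?thesis unfolding q_def m'_def[symmetric] e using A1 A2 by linarith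
    qed
    then have "exp (real (Mr r) * (\<mu> r * \<tau>0 + 3 * (\<mu> r)^2 * (\<sigma>^2 + 2*c*\<tau>0))) \<le> exp q" by simp
    then have "exp 1 * exp (real (Mr r) * (\<mu> r * \<tau>0 + 3 * (\<mu> r)^2 * (\<sigma>^2 + 2*c*\<tau>0))) \<le> K"
      unfolding K_def by simp
    finally show ?thesis .
  qed
  have SM: "S \<in> borel_measurable M"
    unfolding S_def by (intro borel_measurable_scaleR borel_measurable_const borel_measurable_sum Xmeas) auto
  have jensen: "exp (lam * norm (S \<omega>)) \<le> (\<Sum>r\<in>{1..k}. (real (Mr r) / real n) * exp (\<mu> r * norm (T r \<omega>)))"
    for \<omega>
  proof -
    have "norm (S \<omega>) = (1 / real n) * norm (\<Sum>r\<in>{1..k}. T r \<omega>)"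
      unfolding S_def decS using n0 by simp
    also have "\<dots> \<le> (1 / real n) * (\<Sum>r\<in>{1..k}. norm (T r \<omega>))"
      using n0 by (intro mult_left_mono norm_sum) auto
    finally have "lam * norm (S \<omega>) \<le> lam * ((1 / real n) * (\<Sum>r\<in>{1..k}. norm (T r \<omega>)))"
      using l0 by (intro mult_left_mono) auto
    also have "\<dots> = (\<Sum>r\<in>{1..k}. (real (Mr r) / real n) *\<^sub>R (\<mu> r * norm (T r \<omega>)))"
    proof -
      have eqr: "(real (Mr r) / real n) *\<^sub>R (\<mu> r * norm (T r \<omega>)) = lam * ((1 / real n) * norm (T r \<omega>))" for r
        unfolding \<mu>_def using Mr0[of r] n0 by (simp add: field_simps)
      show ?thesis unfolding eqr by (simp only: sum_distrib_left)
    qed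
    finally have A: "exp (lam * norm (S \<omega>)) \<le> exp (\<Sum>r\<in>{1..k}. (real (Mr r) / real n) *\<^sub>R (\<mu> r * norm (T r \<omega>)))"
      by simp
    have "exp (\<Sum>r\<in>{1..k}. (real (Mr r) / real n) *\<^sub>R (\<mu> r * norm (T r \<omega>)))
          \<le> (\<Sum>r\<in>{1..k}. (real (Mr r) / real n) * exp (\<mu> r * norm (T r \<omega>)))"
    proof (rule convex_on_sum[OF _ _ exp_convex])
      show "finite {1..k}" by simp
      show "{1..k} \<noteq> {}" using k1 by simp
      show "(\<Sum>r\<in>{1..k}. real (Mr r) / real n) = 1" using sumM n0 by (simp add: sum_divide_distrib[symmetric])
    qed auto
    with A show ?thesis by linarith
  qed
  have intE: "integrable M (\<lambda>\<omega>. exp (lam * norm (S \<omega>)))"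
  proof (rule bdd_int[where B="(\<Sum>r\<in>{1..k}. (real (Mr r) / real n) * exp (\<mu> r * (real (Mr r) * c)))"])
    show "(\<lambda>\<omega>. exp (lam * norm (S \<omega>))) \<in> borel_measurable M"
      by (rule cont_meas[OF _ SM]) (intro continuous_intros)
    fix x assume x: "x \<in> space M"
    have "exp (lam * norm (S x)) \<le> (\<Sum>r\<in>{1..k}. (real (Mr r) / real n) * exp (\<mu> r * norm (T r x)))"
      by (rule jensen)
    also have "\<dots> \<le> (\<Sum>r\<in>{1..k}. (real (Mr r) / real n) * exp (\<mu> r * (real (Mr r) * c)))"
    proof (rule sum_mono)
      fix r assume r: "r \<in> {1..k}"
      show "(real (Mr r) / real n) * exp (\<mu> r * norm (T r x)) \<le> (real (Mr r) / real n) * exp (\<mu> r * (real (Mr r) * c))"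
        using Tb[OF r x] mu_pos[of r] n0 by (intro mult_left_mono) (auto simp: mult_left_mono)
    qed
    finally show "\<bar>exp (lam * norm (S x))\<bar> \<le> (\<Sum>r\<in>{1..k}. (real (Mr r) / real n) * exp (\<mu> r * (real (Mr r) * c)))"
      by simp
  qed
  have EB: "(\<integral>\<omega>. exp (lam * norm (S \<omega>)) \<partial>M) \<le> K"
  proof -
    have intS: "integrable M (\<lambda>\<omega>. \<Sum>r\<in>{1..k}. (real (Mr r) / real n) * exp (\<mu> r * norm (T r \<omega>)))"
    proof (rule Bochner_Integration.integrable_sum)
      fix r assume r: "r \<in> {1..k}"
      show "integrable M (\<lambda>\<omega>. (real (Mr r) / real n) * exp (\<mu> r * norm (T r \<omega>)))"
        using intT[OF r] by (rule integrable_mult_right)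
    qed
    have "(\<integral>\<omega>. exp (lam * norm (S \<omega>)) \<partial>M)
        \<le> (\<integral>\<omega>. (\<Sum>r\<in>{1..k}. (real (Mr r) / real n) * exp (\<mu> r * norm (T r \<omega>))) \<partial>M)"
      using intE intS jensen by (intro integral_mono) auto
    also have "\<dots> = (\<Sum>r\<in>{1..k}. (real (Mr r) / real n) * (\<integral>\<omega>. exp (\<mu> r * norm (T r \<omega>)) \<partial>M))"
      using intT by (subst Bochner_Integration.integral_sum) auto
    also have "\<dots> \<le> (\<Sum>r\<in>{1..k}. (real (Mr r) / real n) * K)"
      using Tbound n0 by (intro sum_mono mult_left_mono) auto
    also have "\<dots> = K" using sumM n0 by (simp add: sum_distrib_right[symmetric] sum_divide_distrib[symmetric])
    finally show ?thesis .
  qed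
  have Kpos: "exp (lam * t) > 0" by simp
  have mark: "measure M {\<omega> \<in> space M. exp (lam * norm (S \<omega>)) \<ge> exp (lam * t)}
              \<le> (\<integral>\<omega>. exp (lam * norm (S \<omega>)) \<partial>M) / exp (lam * t)"
    by (rule integral_Markov_inequality_measure[OF intE _ _ Kpos]) auto
  have Ksmall: "K / exp (lam * t) \<le> exp (- L)"
  proof -
    have "1 + q - lam * t \<le> - L" unfolding q_def t_eq
      by (rule arith_final[OF L1 s0 a0 t1 t0 lam_def])
    then have "exp (1 + q - lam * t) \<le> exp (- L)" by simp
    moreover have "K / exp (lam * t) = exp (1 + q - lam * t)" unfolding K_def
      by (simp add: exp_diff exp_add)
    ultimately show ?thesis by simp
  qed
  have sub: "{\<omega> \<in> space M. \<not> norm (S \<omega>) \<le> t} \<subseteq> {\<omega> \<in> space M. exp (lam * norm (S \<omega>)) \<ge> exp (lam * t)}"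
    using l0 by (auto intro: mult_left_mono)
  have ev1: "{\<omega> \<in> space M. norm (S \<omega>) \<le> t} \<in> sets M" using SM by measurable
  have ev2: "{\<omega> \<in> space M. exp (lam * norm (S \<omega>)) \<ge> exp (lam * t)} \<in> sets M" using SM by measurable
  have "measure M {\<omega> \<in> space M. \<not> norm (S \<omega>) \<le> t} \<le> measure M {\<omega> \<in> space M. exp (lam * norm (S \<omega>)) \<ge> exp (lam * t)}"
    using sub ev2 by (intro finite_measure_mono) auto
  also have "\<dots> \<le> exp (- L)" using mark EB Ksmall
    by (smt (verit, best) divide_right_mono exp_gt_zero)
  finally have C: "measure M {\<omega> \<in> space M. \<not> norm (S \<omega>) \<le> t} \<le> exp (- L)" .
  have "space M - {\<omega> \<in> space M. norm (S \<omega>) \<le> t} = {\<omega> \<in> space M. \<not> norm (S \<omega>) \<le> t}" by auto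
  then have "measure M {\<omega> \<in> space M. norm (S \<omega>) \<le> t} = 1 - measure M {\<omega> \<in> space M. \<not> norm (S \<omega>) \<le> t}"
    using prob_compl[OF ev1] by simp
  with C have "measure M {\<omega> \<in> space M. norm (S \<omega>) \<le> t} \<ge> 1 - exp (- L)" by simp
  then show ?thesis unfolding S_def t_def .
qed

end


theorem corollary3p4:
  fixes M :: "'a measure"
    and X :: "nat \<Rightarrow> 'a \<Rightarrow> 'h::{real_inner, complete_space, second_countable_topology}"
    and c \<sigma> \<eta> :: real and n :: nat
  assumes "prob_space M"
    and "c > 0" and "\<sigma> > 0"
    and "\<And>i. i \<ge> 1 \<Longrightarrow> X i \<in> borel_measurable M"
    and "\<And>i \<omega>. i \<ge> 1 \<Longrightarrow> \<omega> \<in> space M \<Longrightarrow> norm (X i \<omega>) \<le> c"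
    and "\<And>i. i \<ge> 1 \<Longrightarrow> integrable M (X i)"
    and "\<And>i. i \<ge> 1 \<Longrightarrow> (\<integral>\<omega>. X i \<omega> \<partial>M) = 0"
    and "\<And>i. i \<ge> 1 \<Longrightarrow> (\<integral>\<omega>. (norm (X i \<omega>))^2 \<partial>M) \<le> \<sigma>^2"
    and "n \<ge> 1"
    and "0 < \<eta>" and "\<eta> \<le> 1/2"
  shows "measure M {\<omega> \<in> space M.
           norm ((1 / real n) *\<^sub>R (\<Sum>i=1..n. X i \<omega>))
             \<le> ln (2 / \<eta>) * (13 * \<sigma> / sqrt (real (lstar M X c \<sigma> n))
                              + 21 * c / real (lstar M X c \<sigma> n))}
         \<ge> 1 - \<eta>"
proof -
  interpret P: prob_space M by (rule assms(1))
  define l where "l = lstar M X c \<sigma> n"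
  define L where "L = ln (2 / \<eta>)"
  have eta0: "\<eta> > 0" by (rule assms(10))
  have L1: "L \<ge> 1"
  proof -
    have "exp 1 \<le> (3::real)" using exp_bound[of 1] by simp
    moreover have "4 \<le> 2 / \<eta>" using assms(10,11) by (simp add: field_simps)
    ultimately have "exp 1 \<le> 2 / \<eta>" by linarith
    then show ?thesis unfolding L_def using eta0 by (subst ln_ge_iff) auto
  qed
  have eL: "exp (- L) = \<eta> / 2" unfolding L_def using eta0 by (simp add: exp_minus)
  let ?A = "{l \<in> {1..n}. tau_mix M X c (n div l) \<le> ereal (max (c / real l) (\<sigma> / sqrt (real l)))} \<union> {1}"
  have lin: "l \<in> ?A" unfolding l_def lstar_def by (rule Max_in) auto
  have l1: "l \<ge> 1" and ln: "l \<le> n" using lin assms(9) by auto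
  have main: "measure M {\<omega> \<in> space M. norm ((1 / real n) *\<^sub>R (\<Sum>i=1..n. X i \<omega>))
             \<le> L * (13 * \<sigma> / sqrt (real l) + 21 * c / real l)} \<ge> 1 - \<eta>"
  proof (cases "l = 1")
    case True
    have "{\<omega> \<in> space M. norm ((1 / real n) *\<^sub>R (\<Sum>i=1..n. X i \<omega>))
             \<le> L * (13 * \<sigma> / sqrt (real l) + 21 * c / real l)} = space M"
    proof safe
      fix \<omega> assume om: "\<omega> \<in> space M"
      have n0: "real n > 0" using assms(9) by simp
      have "norm ((1 / real n) *\<^sub>R (\<Sum>i=1..n. X i \<omega>)) = (1 / real n) * norm (\<Sum>i=1..n. X i \<omega>)"
        using n0 by simp
      also have "\<dots> \<le> (1 / real n) * (\<Sum>i=1..n. norm (X i \<omega>))"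
        using n0 by (intro mult_left_mono norm_sum) auto
      also have "\<dots> \<le> (1 / real n) * (\<Sum>i=1..n. c)"
        using n0 om assms(5) by (intro mult_left_mono sum_mono) auto
      also have "\<dots> = c" using n0 by simp
      also have "c \<le> 1 * (21 * c)" using assms(2) by simp
      also have "\<dots> \<le> L * (13 * \<sigma> + 21 * c)"
        using L1 assms(2,3) by (intro mult_mono) auto
      finally show "norm ((1 / real n) *\<^sub>R (\<Sum>i=1..n. X i \<omega>)) \<le> L * (13 * \<sigma> / sqrt (real l) + 21 * c / real l)"
        using True by simp
    qed
    then show ?thesis using P.prob_space eta0 by simp
  next
    case False
    then have good: "tau_mix M X c (n div l) \<le> ereal (max (c / real l) (\<sigma> / sqrt (real l)))"
      using lin by auto
    have "tmix M X c \<sigma> (max (c / real l) (\<sigma> / sqrt (real l))) (n div l)"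
      unfolding tmix_def tmix_axioms_def
      using assms(1-8) good by (auto simp: max_def)
    then interpret T: tmix M X c \<sigma> "max (c / real l) (\<sigma> / sqrt (real l))" "n div l" .
    have "measure M {\<omega> \<in> space M. norm ((1 / real n) *\<^sub>R (\<Sum>i=1..n. X i \<omega>))
             \<le> L * (13 * \<sigma> / sqrt (real l) + 21 * c / real l)} \<ge> 1 - exp (- L)"
      by (rule T.caseB[OF assms(9) l1 ln refl assms(3) refl L1])
    then show ?thesis using eL eta0 by simp
  qed
  then show ?thesis unfolding l_def L_def .
qed


end
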